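(* Let $P_{X,Y}$ be a non-trivial primitive on finite sets $\mathcal X\times\mathcal Y$. Then its canonical embedding $|\psi_{\vec 0}\rangle=\sum_{x,y}\sqrt{P_{X,Y}(x,y)}\,|x\rangle_A|y\rangle_B$ is a non-trivial regular embedding, i.e. $S(X\searrow Y\,|\,B)>0$ and $S(Y\searrow X\,|\,A)>0$.
   Context: A primitive is a joint probability distribution $P_{X,Y}$ on finite sets $\mathcal X\times\mathcal Y$. Dependent part: for $f_X(x):=P_{Y|X=x}$ (the conditional distribution of $Y$ given $X=x$), define the random variable $X\searrow Y:=f_X(X)$; symmetrically $Y\searrow X:=f_Y(Y)$ with $f_Y(y)=P_{X|Y=y}$. $P_{X,Y}$ is trivial if $H(X\searrow Y\,|\,Y)=0$ (equivalently $H(Y\searrow X\,|\,X)=0$), non-trivial otherwise; $H$ is Shannon entropy (base 2). A regular embedding of $P_{X,Y}$ is a state in $\mathcal H_A\otimes\mathcal H_B$ (with computational bases $\{|x\rangle\}_{x\in\mathcal X}$, $\{|y\rangle\}_{y\in\mathcal Y}$) of the form $\sum_{x,y}e^{i\theta(x,y)}\sqrt{P_{X,Y}(x,y)}|x\rangle_A|y\rangle_B$ for a real function $\theta$; the canonical one has $\theta\equiv 0$. A regular embedding is trivial if $S(X\searrow Y|B)=0$ or $S(Y\searrow X|A)=0$, and non-trivial otherwise. Here $S(X\searrow Y|B)$ is the von Neumann conditional entropy $S(PQ)-S(Q)$ of the classical-quantum state obtained by measuring register $A$ in the computational basis, obtaining $X$, and computing $X\searrow Y$, with $B$ kept quantum;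 $S(Y\searrow X|A)$ is defined symmetrically. *)

theory Defs
  imports "HOL-Analysis.Analysis" "Jordan_Normal_Form.Char_Poly"
begin

text \<open>Finite sets are modelled as X = {0..<m}, Y = {0..<n}; a primitive is
  P :: nat => nat => real (P x y = P_{X,Y}(x,y)).\<close>

definition primitive :: "nat \<Rightarrow> nat \<Rightarrow> (nat \<Rightarrow> nat \<Rightarrow> real) \<Rightarrow> bool" where
  "primitive m n P \<longleftrightarrow> (\<forall>x y. 0 \<le> P x y) \<and> (\<forall>x y. (m \<le> x \<or> n \<le> y) \<longrightarrow> P x y = 0)
     \<and> (\<Sum>x<m. \<Sum>y<n. P x y) = 1"

definition margX :: "nat \<Rightarrow> (nat \<Rightarrow> nat \<Rightarrow> real) \<Rightarrow> nat \<Rightarrow> real" where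
  "margX n P x = (\<Sum>y<n. P x y)"

definition margY :: "nat \<Rightarrow> (nat \<Rightarrow> nat \<Rightarrow> real) \<Rightarrow> nat \<Rightarrow> real" where
  "margY m P y = (\<Sum>x<m. P x y)"

text \<open>f_X(x) = P_{Y|X=x}, as a function on Y (zero outside {0..<n}).\<close>
definition condY :: "nat \<Rightarrow> (nat \<Rightarrow> nat \<Rightarrow> real) \<Rightarrow> nat \<Rightarrow> (nat \<Rightarrow> real)" where
  "condY n P x = (\<lambda>y. if y < n then P x y / margX n P x else 0)"

definition eta :: "real \<Rightarrow> real" where
  "eta t = (if t \<le> 0 then 0 else - t * log 2 t)"

text \<open>Support of P_X and the values of the dependent part X\<searrow>Y = f_X(X).\<close>
definition suppX :: "nat \<Rightarrow> nat \<Rightarrow> (nat \<Rightarrow> nat \<Rightarrow> real) \<Rightarrow> nat list" where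
  "suppX m n P = filter (\<lambda>x. 0 < margX n P x) [0..<m]"

definition dep_values :: "nat \<Rightarrow> nat \<Rightarrow> (nat \<Rightarrow> nat \<Rightarrow> real) \<Rightarrow> (nat \<Rightarrow> real) list" where
  "dep_values m n P = remdups (map (condY n P) (suppX m n P))"

definition dep_joint :: "nat \<Rightarrow> nat \<Rightarrow> (nat \<Rightarrow> nat \<Rightarrow> real) \<Rightarrow> (nat \<Rightarrow> real) \<Rightarrow> nat \<Rightarrow> real" where
  "dep_joint m n P z y = (\<Sum>x\<in>set (suppX m n P). if condY n P x = z then P x y else 0)"

text \<open>Shannon conditional entropy H(X\<searrow>Y | Y) = H(X\<searrow>Y, Y) - H(Y), base 2.\<close>
definition dep_cond_entropy :: "nat \<Rightarrow> nat \<Rightarrow> (nat \<Rightarrow> nat \<Rightarrow> real) \<Rightarrow> real" where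
  "dep_cond_entropy m n P =
     (\<Sum>z\<in>set (dep_values m n P). \<Sum>y<n. eta (dep_joint m n P z y)) - (\<Sum>y<n. eta (margY m P y))"

definition transp_prim :: "(nat \<Rightarrow> nat \<Rightarrow> real) \<Rightarrow> (nat \<Rightarrow> nat \<Rightarrow> real)" where
  "transp_prim P = (\<lambda>y x. P x y)"

definition nontrivial_primitive :: "nat \<Rightarrow> nat \<Rightarrow> (nat \<Rightarrow> nat \<Rightarrow> real) \<Rightarrow> bool" where
  "nontrivial_primitive m n P \<longleftrightarrow> dep_cond_entropy m n P \<noteq> 0"

text \<open>Applied to positive semidefinite matrices
  (possibly unnormalised), whose eigenvalues are real and nonnegative.\<close>
definition vN_entropy :: "complex mat \<Rightarrow> real" where
  "vN_entropy A = (\<Sum>a\<in>{a. poly (char_poly A) a = 0}.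
      real (order a (char_poly A)) * eta (Re a))"

text \<open>Regular embedding in H_A \<otimes> H_B, basis |x>|y> has index x*n+y.\<close>
definition regular_embedding :: "nat \<Rightarrow> nat \<Rightarrow> (nat \<Rightarrow> nat \<Rightarrow> real) \<Rightarrow> (nat \<Rightarrow> nat \<Rightarrow> real) \<Rightarrow> complex vec" where
  "regular_embedding m n P \<theta> =
     vec (m * n) (\<lambda>i. cis (\<theta> (i div n) (i mod n)) * complex_of_real (sqrt (P (i div n) (i mod n))))"

definition canonical_embedding :: "nat \<Rightarrow> nat \<Rightarrow> (nat \<Rightarrow> nat \<Rightarrow> real) \<Rightarrow> complex vec" where
  "canonical_embedding m n P = regular_embedding m n P (\<lambda>x y. 0)"

text \<open>Given amplitudes a u v = <u|<v|psi> (u: measured register of size m,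
  v: kept register of size n) and a function g of the measurement outcome,
  the cq-state of (g(U), V) after measuring the first register, and the
  reduced state of V.  Outcomes u outside the support list are omitted
  (their post-measurement states are zero).\<close>
definition cq_block :: "nat \<Rightarrow> nat \<Rightarrow> (nat \<Rightarrow> nat \<Rightarrow> complex) \<Rightarrow> nat list \<Rightarrow> (nat \<Rightarrow> 'z) \<Rightarrow> 'z \<Rightarrow> complex mat" where
  "cq_block m n a us g z = mat n n (\<lambda>(v, v').
     (\<Sum>u\<in>set us. if g u = z then a u v * cnj (a u v') else 0))"

definition cq_state :: "nat \<Rightarrow> nat \<Rightarrow> (nat \<Rightarrow> nat \<Rightarrow> complex) \<Rightarrow> nat list \<Rightarrow> (nat \<Rightarrow> 'z) \<Rightarrow> complex mat" where
  "cq_state m n a us g =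
     (let zs = remdups (map g us); k = length zs in
      mat (k * n) (k * n) (\<lambda>(i, j).
        if i div n = j div n then cq_block m n a us g (zs ! (i div n)) $$ (i mod n, j mod n) else 0))"

definition reduced_state :: "nat \<Rightarrow> nat \<Rightarrow> (nat \<Rightarrow> nat \<Rightarrow> complex) \<Rightarrow> complex mat" where
  "reduced_state m n a = mat n n (\<lambda>(v, v'). \<Sum>u<m. a u v * cnj (a u v'))"

definition cq_cond_entropy :: "nat \<Rightarrow> nat \<Rightarrow> (nat \<Rightarrow> nat \<Rightarrow> complex) \<Rightarrow> nat list \<Rightarrow> (nat \<Rightarrow> 'z) \<Rightarrow> real" where
  "cq_cond_entropy m n a us g = vN_entropy (cq_state m n a us g) - vN_entropy (reduced_state m n a)"

definition S_XY_B :: "nat \<Rightarrow> nat \<Rightarrow> (nat \<Rightarrow> nat \<Rightarrow> real) \<Rightarrow> complex vec \<Rightarrow> real" where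
  "S_XY_B m n P \<psi> = cq_cond_entropy m n (\<lambda>x y. \<psi> $ (x * n + y)) (suppX m n P) (condY n P)"

definition S_YX_A :: "nat \<Rightarrow> nat \<Rightarrow> (nat \<Rightarrow> nat \<Rightarrow> real) \<Rightarrow> complex vec \<Rightarrow> real" where
  "S_YX_A m n P \<psi> = cq_cond_entropy n m (\<lambda>y x. \<psi> $ (x * n + y))
      (suppX n m (transp_prim P)) (condY m (transp_prim P))"

end

theory Submission
  imports Defs "Jordan_Normal_Form.Schur_Decomposition"
begin

definition ipf :: "nat \<Rightarrow> (nat \<Rightarrow> complex) \<Rightarrow> (nat \<Rightarrow> complex) \<Rightarrow> complex" where
  "ipf n x y = (\<Sum>v<n. cnj (x v) * y v)"

definition onb :: "nat \<Rightarrow> (nat \<Rightarrow> nat \<Rightarrow> complex) \<Rightarrow> bool" where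
  "onb n e \<longleftrightarrow> (\<forall>j<n. \<forall>j'<n. ipf n (e j) (e j') = (if j = j' then 1 else 0))"

lemma onb_complete:
  assumes "onb n e" "v < n" "v' < n"
  shows "(\<Sum>j<n. e j v * cnj (e j v')) = (if v = v' then 1 else 0)"
proof -
  define U where "U = mat n n (\<lambda>(v,j). e j v)"
  define Uh where "Uh = mat n n (\<lambda>(j,v). cnj (e j v))"
  have U: "U \<in> carrier_mat n n" and Uh: "Uh \<in> carrier_mat n n" unfolding U_def Uh_def by auto
  have "Uh * U = 1\<^sub>m n"
  proof (rule eq_matI)
    fix i j assume "i < dim_row (1\<^sub>m n)" "j < dim_col (1\<^sub>m n)"
    then have ij: "i < n" "j < n" by auto
    have "(Uh * U) $$ (i,j) = (\<Sum>v<n. cnj (e i v) * e j v)"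
      using ij unfolding U_def Uh_def by (simp add: scalar_prod_def lessThan_atLeast0)
    also have "\<dots> = ipf n (e i) (e j)" unfolding ipf_def ..
    finally show "(Uh * U) $$ (i,j) = 1\<^sub>m n $$ (i,j)" using assms(1) ij unfolding onb_def by auto
  qed (auto simp: U_def Uh_def)
  from mat_mult_left_right_inverse[OF Uh U this] have "U * Uh = 1\<^sub>m n" .
  then have "(U * Uh) $$ (v,v') = 1\<^sub>m n $$ (v,v')" by simp
  then show ?thesis using assms(2,3) unfolding U_def Uh_def
    by (simp add: scalar_prod_def lessThan_atLeast0 split: if_splits)
qed

lemma prod_list_upt_map: "prod_list (map f [0..<n]) = (\<Prod>j<n. f j)"
  by (induction n) (auto simp: lessThan_Suc mult.commute)

lemma char_poly_onb:
  fixes A :: "complex mat"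
  assumes A: "A \<in> carrier_mat n n" and o: "onb n e"
    and ev: "\<And>j v. j < n \<Longrightarrow> v < n \<Longrightarrow> (\<Sum>v'<n. A $$ (v,v') * e j v') = d j * e j v"
  shows "char_poly A = (\<Prod>j<n. [:- d j, 1:])"
proof -
  define U where "U = mat n n (\<lambda>(v,j). e j v)"
  define Uh where "Uh = mat n n (\<lambda>(j,v). cnj (e j v))"
  define D where "D = mat n n (\<lambda>(i,j). if i = j then d i else 0)"
  have U: "U \<in> carrier_mat n n" and Uh: "Uh \<in> carrier_mat n n" and D: "D \<in> carrier_mat n n"
    unfolding U_def Uh_def D_def by auto
  have UhU: "Uh * U = 1\<^sub>m n"
  proof (rule eq_matI)
    fix i j assume "i < dim_row (1\<^sub>m n)" "j < dim_col (1\<^sub>m n)"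
    then have ij: "i < n" "j < n" by auto
    have "(Uh * U) $$ (i,j) = (\<Sum>v<n. cnj (e i v) * e j v)"
      using ij unfolding U_def Uh_def by (simp add: scalar_prod_def lessThan_atLeast0)
    also have "\<dots> = ipf n (e i) (e j)" unfolding ipf_def ..
    finally show "(Uh * U) $$ (i,j) = 1\<^sub>m n $$ (i,j)" using o ij unfolding onb_def by auto
  qed (auto simp: U_def Uh_def)
  from mat_mult_left_right_inverse[OF Uh U this] have UUh: "U * Uh = 1\<^sub>m n" .
  have AU: "A * U = U * D"
  proof (rule eq_matI)
    fix i j assume "i < dim_row (U * D)" "j < dim_col (U * D)"
    then have ij: "i < n" "j < n" using U D by auto
    have "(A * U) $$ (i,j) = (\<Sum>v'<n. A $$ (i,v') * e j v')"
      using ij A unfolding U_def by (simp add: scalar_prod_def lessThan_atLeast0)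
    also have "\<dots> = d j * e j i" using ev ij by simp
    also have "\<dots> = (\<Sum>k<n. e k i * (if k = j then d k else 0))"
      using ij by (simp add: if_distrib sum.delta' mult.commute cong: if_cong)
    also have "\<dots> = (U * D) $$ (i,j)"
      using ij unfolding U_def D_def by (simp add: scalar_prod_def lessThan_atLeast0)
    finally show "(A * U) $$ (i,j) = (U * D) $$ (i,j)" .
  qed (use A U D in auto)
  have "A = U * D * Uh"
  proof -
    have "A = A * (U * Uh)" using UUh A by simp
    also have "\<dots> = (A * U) * Uh" using A U Uh by (simp add: assoc_mult_mat)
    also have "\<dots> = U * D * Uh" using AU by simp
    finally show ?thesis .
  qed
  then have "similar_mat_wit A D U Uh" unfolding similar_mat_wit_def Let_def
    using A U Uh D UUh UhU by auto
  then have "similar_mat A D" unfolding similar_mat_def by blast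
  from char_poly_similar[OF this] have "char_poly A = char_poly D" .
  also have "\<dots> = (\<Prod>a\<leftarrow>diag_mat D. [:- a, 1:])"
    by (rule char_poly_upper_triangular[OF D]) (auto simp: D_def)
  also have "diag_mat D = map d [0..<n]"
    unfolding diag_mat_def D_def by (auto intro: nth_equalityI)
  finally show ?thesis by (simp add: prod_list_upt_map o_def)
qed

lemma order_prod_linear:
  assumes "finite J"
  shows "Polynomial.order a (\<Prod>j\<in>J. [:- d j, 1:]) = card {j\<in>J. d j = (a::complex)}"
  using assms
proof (induction J rule: finite_induct)
  case empty
  then show ?case by (simp add: order_0I)
next
  case (insert x F)
  have nz: "(\<Prod>j\<in>F. [:- d j, 1:]) \<noteq> 0" by (simp add: insert.hyps(1))
  have "Polynomial.order a (\<Prod>j\<in>insert x F. [:- d j, 1:]) = Polynomial.order a ([:- d x, 1:] * (\<Prod>j\<in>F. [:- d j, 1:]))"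
    using insert by simp
  also have "\<dots> = Polynomial.order a [:- d x, 1:] + Polynomial.order a (\<Prod>j\<in>F. [:- d j, 1:])"
    by (rule order_mult) (use nz in \<open>metis mult_eq_0_iff pCons_eq_0_iff one_neq_zero\<close>)
  also have "\<dots> = (if d x = a then 1 else 0) + card {j\<in>F. d j = a}"
    using insert by (simp add: order_linear')
  also have "\<dots> = card {j\<in>insert x F. d j = a}"
  proof -
    have "{j\<in>insert x F. d j = a} = (if d x = a then insert x {j\<in>F. d j = a} else {j\<in>F. d j = a})"
      by auto
    then show ?thesis using insert by auto
  qed
  finally show ?case .
qed

lemma vN_entropy_prod:
  fixes d :: "nat \<Rightarrow> complex" and n :: nat
  assumes "char_poly A = (\<Prod>j<n. [:- d j, 1:])"
  shows "vN_entropy A = (\<Sum>j<n. eta (Re (d j)))"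
proof -
  have roots: "{a. poly (\<Prod>j<n. [:- d j, 1:]) a = 0} = d ` {..<n}"
  proof -
    have "poly (\<Prod>j<n. [:- d j, 1:]) a = 0 \<longleftrightarrow> (\<exists>j\<in>{..<n}. a - d j = 0)" for a
      by (simp add: poly_prod prod_zero_iff[of "{..<n}" "\<lambda>j. a - d j"])
    then show ?thesis by (auto simp: image_iff)
  qed
  have "vN_entropy A = (\<Sum>a\<in>d ` {..<n}. real (card {j\<in>{..<n}. d j = a}) * eta (Re a))"
    unfolding vN_entropy_def assms roots by (simp add: order_prod_linear)
  also have "\<dots> = (\<Sum>a\<in>d ` {..<n}. (\<Sum>j\<in>{j\<in>{..<n}. d j = a}. eta (Re (d j))))"
    by (rule sum.cong) auto
  also have "\<dots> = (\<Sum>j<n. eta (Re (d j)))"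
    by (rule sum.image_gen[symmetric]) auto
  finally show ?thesis .
qed

lemma ipf_cnj: "ipf n y x = cnj (ipf n x y)"
  unfolding ipf_def by (simp add: mult.commute)

lemma ipf_self_real: "ipf n x x = complex_of_real (\<Sum>v<n. (cmod (x v))^2)"
  unfolding ipf_def of_real_sum by (rule sum.cong[OF refl]) (metis complex_norm_square mult.commute)

lemma sum_tri_swap:
  fixes f :: "nat \<Rightarrow> nat \<Rightarrow> 'a::comm_monoid_add"
  shows "(\<Sum>l<k. \<Sum>l'\<le>l. f l l') = (\<Sum>l'<k. \<Sum>l\<in>{l'..<k}. f l l')"
proof -
  have "(\<Sum>l<k. \<Sum>l'\<le>l. f l l') = (\<Sum>l<k. \<Sum>l'<k. if l' \<le> l then f l l' else 0)"
  proof (rule sum.cong[OF refl])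
    fix l assume "l \<in> {..<k}"
    then have "{..l} = {l'\<in>{..<k}. l' \<le> l}" by auto
    then show "(\<Sum>l'\<le>l. f l l') = (\<Sum>l'<k. if l' \<le> l then f l l' else 0)"
      by (simp only:) (rule sum.inter_filter, simp)
  qed
  also have "\<dots> = (\<Sum>l'<k. \<Sum>l<k. if l' \<le> l then f l l' else 0)" by (rule sum.swap)
  also have "\<dots> = (\<Sum>l'<k. \<Sum>l\<in>{l'..<k}. f l l')"
  proof (rule sum.cong[OF refl])
    fix l' assume "l' \<in> {..<k}"
    have "{l'..<k} = {l\<in>{..<k}. l' \<le> l}" by auto
    then show "(\<Sum>l<k. if l' \<le> l then f l l' else 0) = (\<Sum>l\<in>{l'..<k}. f l l')"
      by (simp only:) (rule sum.inter_filter[symmetric], simp)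
  qed
  finally show ?thesis .
qed

lemma gs_step_exists:
  fixes p :: "nat \<Rightarrow> nat \<Rightarrow> complex"
  assumes indep: "\<And>c. (\<forall>v<n. (\<Sum>j<n. c j * p j v) = 0) \<Longrightarrow> \<forall>j<n. c j = 0"
  shows "k \<le> n \<Longrightarrow> \<exists>u C D. (\<forall>i<k. \<forall>j<k. ipf n (u i) (u j) = (if i = j then 1 else 0))
     \<and> (\<forall>j<k. \<forall>v<n. u j v = (\<Sum>l\<le>j. C l j * p l v))
     \<and> (\<forall>j<k. \<forall>v<n. p j v = (\<Sum>l\<le>j. D l j * u l v))"
proof (induction k)
  case 0
  then show ?case by auto
next
  case (Suc k)
  then have kn: "k < n" by auto
  from Suc.IH[OF less_imp_le[OF kn]] obtain u C D where
    orth: "\<forall>i<k. \<forall>j<k. ipf n (u i) (u j) = (if i = j then 1 else 0)" and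
    uC: "\<forall>j<k. \<forall>v<n. u j v = (\<Sum>l\<le>j. C l j * p l v)" and
    pD: "\<forall>j<k. \<forall>v<n. p j v = (\<Sum>l\<le>j. D l j * u l v)" by blast
  define a where "a l = ipf n (u l) (p k)" for l
  define w where "w v = p k v - (\<Sum>l<k. a l * u l v)" for v
  define b where "b l' = (\<Sum>l\<in>{l'..<k}. a l * C l' l)" for l'
  have w_exp: "w v = p k v - (\<Sum>l'<k. b l' * p l' v)" if "v < n" for v
  proof -
    have "(\<Sum>l<k. a l * u l v) = (\<Sum>l<k. \<Sum>l'\<le>l. a l * C l' l * p l' v)"
      using uC that by (simp add: sum_distrib_left mult.assoc)
    also have "\<dots> = (\<Sum>l'<k. \<Sum>l\<in>{l'..<k}. a l * C l' l * p l' v)" by (rule sum_tri_swap)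
    also have "\<dots> = (\<Sum>l'<k. b l' * p l' v)" unfolding b_def by (simp add: sum_distrib_right)
    finally show ?thesis unfolding w_def by simp
  qed
  have wnz: "\<exists>v<n. w v \<noteq> 0"
  proof (rule ccontr)
    assume "\<not> ?thesis"
    then have w0: "\<forall>v<n. w v = 0" by auto
    define c where "c j = (if j < k then - b j else if j = k then 1 else 0)" for j
    have "\<forall>v<n. (\<Sum>j<n. c j * p j v) = 0"
    proof (intro allI impI)
      fix v assume v: "v < n"
      have split: "{..<n} = {..<k} \<union> {k} \<union> {Suc k..<n}" using kn by auto
      have "(\<Sum>j<n. c j * p j v) = (\<Sum>j<k. c j * p j v) + c k * p k v + (\<Sum>j\<in>{Suc k..<n}. c j * p j v)"
        unfolding split by (subst sum.union_disjoint, auto)+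
      also have "\<dots> = - (\<Sum>j<k. b j * p j v) + p k v"
        unfolding c_def by (simp add: sum_negf)
      also have "\<dots> = w v" using w_exp[OF v] by simp
      finally show "(\<Sum>j<n. c j * p j v) = 0" using w0 v by simp
    qed
    from indep[OF this] kn have "c k = 0" by auto
    then show False unfolding c_def by simp
  qed
  define r where "r = sqrt (\<Sum>v<n. (cmod (w v))^2)"
  have r0: "r > 0"
  proof -
    from wnz obtain v where v: "v < n" "w v \<noteq> 0" by auto
    have "0 < (cmod (w v))^2" using v by simp
    also have "\<dots> \<le> (\<Sum>v<n. (cmod (w v))^2)"
      by (rule member_le_sum) (use v in auto)
    finally show ?thesis unfolding r_def by simp
  qed
  have r2: "(\<Sum>v<n. (cmod (w v))^2) = r^2" unfolding r_def by (simp add: sum_nonneg)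
  have ipfww: "ipf n w w = complex_of_real (r^2)"
    by (simp only: ipf_self_real r2)
  have ipf_ul_w: "ipf n (u l) w = 0" if l: "l < k" for l
  proof -
    have "ipf n (u l) w = ipf n (u l) (p k) - (\<Sum>l'<k. a l' * ipf n (u l) (u l'))"
      unfolding w_def ipf_def by (simp add: sum_subtractf right_diff_distrib sum_distrib_left
          algebra_simps sum.swap[of _ "{..<k}"])
    also have "(\<Sum>l'<k. a l' * ipf n (u l) (u l')) = (\<Sum>l'<k. if l' = l then a l' else 0)"
      by (rule sum.cong[OF refl]) (use orth l in auto)
    also have "\<dots> = a l" using l by simp
    finally show ?thesis unfolding a_def by simp
  qed
  define u' where "u' = u(k := (\<lambda>v. w v / complex_of_real r))"
  define C' where "C' l j = (if j = k then (if l = k then 1 / complex_of_real r else - b l / complex_of_real r) else C l j)" for l j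
  define D' where "D' l j = (if j = k then (if l = k then complex_of_real r else a l) else D l j)" for l j
  have ipf_scale1: "ipf n (\<lambda>v. x v / c) y = ipf n x y / cnj c" for x y and c :: complex
    unfolding ipf_def by (simp add: sum_divide_distrib)
  have ipf_scale2: "ipf n x (\<lambda>v. y v / c) = ipf n x y / c" for x y and c :: complex
    unfolding ipf_def by (simp add: sum_divide_distrib)
  have "\<forall>i<Suc k. \<forall>j<Suc k. ipf n (u' i) (u' j) = (if i = j then 1 else 0)"
  proof (intro allI impI)
    fix i j assume i: "i < Suc k" and j: "j < Suc k"
    show "ipf n (u' i) (u' j) = (if i = j then 1 else 0)"
    proof (cases "i = k")
      case True
      show ?thesis
      proof (cases "j = k")
        case True
        with \<open>i = k\<close> show ?thesis using r0 unfolding u'_def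
          by (simp add: ipf_scale1 ipf_scale2 ipfww power2_eq_square)
      next
        case False
        then have "j < k" using j by auto
        have "ipf n w (u j) = 0" using ipf_ul_w[OF \<open>j < k\<close>] ipf_cnj[of n w "u j"] by simp
        then show ?thesis using \<open>i = k\<close> False unfolding u'_def by (simp add: ipf_scale1)
      qed
    next
      case False
      then have "i < k" using i by auto
      show ?thesis
      proof (cases "j = k")
        case True
        then show ?thesis using \<open>i < k\<close> ipf_ul_w[OF \<open>i < k\<close>] unfolding u'_def by (simp add: ipf_scale2)
      next
        case False
        then show ?thesis using \<open>i < k\<close> j orth unfolding u'_def by auto
      qed
    qed
  qed
  moreover have "\<forall>j<Suc k. \<forall>v<n. u' j v = (\<Sum>l\<le>j. C' l j * p l v)"
  proof (intro allI impI)
    fix j v assume j: "j < Suc k" and v: "v < n"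
    show "u' j v = (\<Sum>l\<le>j. C' l j * p l v)"
    proof (cases "j = k")
      case True
      have "(\<Sum>l\<le>k. C' l k * p l v) = (\<Sum>l<k. C' l k * p l v) + C' k k * p k v"
        by (simp add: lessThan_Suc_atMost[symmetric])
      also have "\<dots> = (p k v - (\<Sum>l<k. b l * p l v)) / complex_of_real r"
        unfolding C'_def by (simp add: sum_divide_distrib diff_divide_distrib sum_negf)
      also have "\<dots> = w v / complex_of_real r" using w_exp[OF v] by simp
      finally show ?thesis using True unfolding u'_def by simp
    next
      case False
      then have "j < k" using j by auto
      then show ?thesis using uC v unfolding u'_def C'_def by auto
    qed
  qed
  moreover have "\<forall>j<Suc k. \<forall>v<n. p j v = (\<Sum>l\<le>j. D' l j * u' l v)"
  proof (intro allI impI)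
    fix j v assume j: "j < Suc k" and v: "v < n"
    show "p j v = (\<Sum>l\<le>j. D' l j * u' l v)"
    proof (cases "j = k")
      case True
      have "(\<Sum>l\<le>k. D' l k * u' l v) = (\<Sum>l<k. D' l k * u' l v) + D' k k * u' k v"
        by (simp add: lessThan_Suc_atMost[symmetric])
      also have "\<dots> = (\<Sum>l<k. a l * u l v) + w v"
        unfolding D'_def u'_def using r0 by simp
      also have "\<dots> = p k v" unfolding w_def by simp
      finally show ?thesis using True by simp
    next
      case False
      then have jk: "j < k" using j by auto
      have "p j v = (\<Sum>l\<le>j. D l j * u l v)" using pD jk v by auto
      also have "\<dots> = (\<Sum>l\<le>j. D' l j * u' l v)"
        by (rule sum.cong) (use jk in \<open>auto simp: D'_def u'_def\<close>)
      finally show ?thesis .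
    qed
  qed
  ultimately show ?case by blast
qed

lemma upper_tri_mult:
  fixes X Y :: "'a::comm_ring_1 mat"
  assumes X: "X \<in> carrier_mat n n" and Y: "Y \<in> carrier_mat n n"
    and uX: "upper_triangular X" and uY: "upper_triangular Y"
  shows "upper_triangular (X * Y)"
proof (rule upper_triangularI)
  fix i j assume j: "j < i" and i: "i < dim_row (X * Y)"
  then have i': "i < n" using X by simp
  have "(X * Y) $$ (i,j) = (\<Sum>l<n. X $$ (i,l) * Y $$ (l,j))"
    using i' j X Y by (simp add: scalar_prod_def lessThan_atLeast0)
  also have "\<dots> = 0"
  proof (rule sum.neutral, intro ballI)
    fix l assume l: "l \<in> {..<n}"
    show "X $$ (i,l) * Y $$ (l,j) = 0"
    proof (cases "l < i")
      case True
      then have "X $$ (i,l) = 0" using uX i' X by (auto simp: upper_triangular_def)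
      then show ?thesis by simp
    next
      case False
      then have "j < l" using j by simp
      then have "Y $$ (l,j) = 0" using uY l Y by (auto simp: upper_triangular_def)
      then show ?thesis by simp
    qed
  qed
  finally show "(X * Y) $$ (i,j) = 0" .
qed

lemma sum_atMost_as_if:
  fixes j n :: nat
  assumes "j < n"
  shows "(\<Sum>l\<le>j. f l) = (\<Sum>l<n. if l \<le> j then f l else (0::'a::comm_monoid_add))"
proof -
  have "(\<Sum>l<n. if l \<le> j then f l else 0) = (\<Sum>l\<in>{l\<in>{..<n}. l \<le> j}. f l)"
    by (rule sum.inter_filter[symmetric]) simp
  also have "{l\<in>{..<n}. l \<le> j} = {..j}" using assms by auto
  finally show ?thesis by simp
qed

lemma spectral:
  fixes A :: "complex mat"
  assumes A: "A \<in> carrier_mat n n" and herm: "\<forall>i<n. \<forall>j<n. A $$ (i,j) = cnj (A $$ (j,i))"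
  shows "\<exists>u d. onb n u \<and> (\<forall>j<n. \<forall>v<n. (\<Sum>v'<n. A $$ (v,v') * u j v') = complex_of_real (d j) * u j v)"
proof -
  from char_poly_factorized[OF A] obtain es where es: "char_poly A = (\<Prod>a\<leftarrow>es. [:- a, 1:])" by blast
  from schur_decomposition_exists[OF A es] obtain B where B: "B \<in> carrier_mat n n"
    and uB: "upper_triangular B" and sim: "similar_mat A B" by blast
  from similar_matD[OF sim] obtain n' P Q where
    PQ': "{A,B,P,Q} \<subseteq> carrier_mat n' n'" "P * Q = 1\<^sub>m n'" "Q * P = 1\<^sub>m n'" "A = P * B * Q" by blast
  have n': "n' = n" using PQ'(1) A by auto
  have P: "P \<in> carrier_mat n n" and Q: "Q \<in> carrier_mat n n" using PQ'(1) n' by auto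
  have QP: "Q * P = 1\<^sub>m n" and PQ: "P * Q = 1\<^sub>m n" and AeqP: "A = P * B * Q" using PQ' n' by auto
  define p where "p j v = P $$ (v,j)" for j v
  have indep: "\<forall>j<n. c j = 0" if hc: "\<forall>v<n. (\<Sum>j<n. c j * p j v) = 0" for c
  proof -
    define x where "x = vec n c"
    have x: "x \<in> carrier_vec n" unfolding x_def by simp
    have Px: "P *\<^sub>v x = 0\<^sub>v n"
    proof (rule eq_vecI)
      fix v assume "v < dim_vec (0\<^sub>v n)"
      then have v: "v < n" by simp
      have "(P *\<^sub>v x) $ v = (\<Sum>j<n. P $$ (v,j) * c j)"
        using v P unfolding x_def by (simp add: scalar_prod_def lessThan_atLeast0)
      also have "\<dots> = 0" using hc v unfolding p_def by (simp add: mult.commute)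
      finally show "(P *\<^sub>v x) $ v = 0\<^sub>v n $ v" using v by simp
    qed (use P in simp)
    have "x = (Q * P) *\<^sub>v x" using QP x by simp
    also have "\<dots> = Q *\<^sub>v (P *\<^sub>v x)" using Q P x by (simp add: assoc_mult_mat_vec)
    also have "\<dots> = 0\<^sub>v n" unfolding Px using Q by (intro eq_vecI) (auto simp: scalar_prod_def)
    finally have "x = 0\<^sub>v n" .
    then show ?thesis unfolding x_def by (metis index_vec index_zero_vec(1))
  qed
  from gs_step_exists[of n p n] indep obtain u C D where
    orth: "\<forall>i<n. \<forall>j<n. ipf n (u i) (u j) = (if i = j then 1 else 0)" and
    uC: "\<forall>j<n. \<forall>v<n. u j v = (\<Sum>l\<le>j. C l j * p l v)" and
    pD: "\<forall>j<n. \<forall>v<n. p j v = (\<Sum>l\<le>j. D l j * u l v)" by blast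
  have o: "onb n u" using orth unfolding onb_def by auto
  define U where "U = mat n n (\<lambda>(v,j). u j v)"
  define Uh where "Uh = mat n n (\<lambda>(j,v). cnj (u j v))"
  define Cm where "Cm = mat n n (\<lambda>(l,j). if l \<le> j then C l j else 0)"
  define Dm where "Dm = mat n n (\<lambda>(l,j). if l \<le> j then D l j else 0)"
  have U: "U \<in> carrier_mat n n" and Uh: "Uh \<in> carrier_mat n n" and Cm: "Cm \<in> carrier_mat n n"
    and Dm: "Dm \<in> carrier_mat n n" unfolding U_def Uh_def Cm_def Dm_def by auto
  have uCm: "upper_triangular Cm" and uDm: "upper_triangular Dm"
    unfolding Cm_def Dm_def by (auto simp: upper_triangular_def)
  have UPC: "U = P * Cm"
  proof (rule eq_matI)
    fix v j assume "v < dim_row (P * Cm)" "j < dim_col (P * Cm)"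
    then have vj: "v < n" "j < n" using P Cm by auto
    have "(P * Cm) $$ (v,j) = (\<Sum>l<n. P $$ (v,l) * (if l \<le> j then C l j else 0))"
      using vj P unfolding Cm_def by (simp add: scalar_prod_def lessThan_atLeast0)
    also have "\<dots> = (\<Sum>l\<le>j. C l j * p l v)"
      using vj by (subst sum_atMost_as_if[OF vj(2)]) (auto intro!: sum.cong simp: p_def)
    also have "\<dots> = U $$ (v,j)" using uC vj unfolding U_def by simp
    finally show "U $$ (v,j) = (P * Cm) $$ (v,j)" by simp
  qed (use U P Cm in auto)
  have PUD: "P = U * Dm"
  proof (rule eq_matI)
    fix v j assume "v < dim_row (U * Dm)" "j < dim_col (U * Dm)"
    then have vj: "v < n" "j < n" using U Dm by auto
    have "(U * Dm) $$ (v,j) = (\<Sum>l<n. u l v * (if l \<le> j then D l j else 0))"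
      using vj unfolding U_def Dm_def by (simp add: scalar_prod_def lessThan_atLeast0)
    also have "\<dots> = (\<Sum>l\<le>j. D l j * u l v)"
      using vj by (subst sum_atMost_as_if[OF vj(2)]) (auto intro!: sum.cong)
    also have "\<dots> = P $$ (v,j)" using pD vj unfolding p_def by simp
    finally show "P $$ (v,j) = (U * Dm) $$ (v,j)" by simp
  qed (use U P Dm in auto)
  have UhU: "Uh * U = 1\<^sub>m n"
  proof (rule eq_matI)
    fix i j assume "i < dim_row (1\<^sub>m n)" "j < dim_col (1\<^sub>m n)"
    then have ij: "i < n" "j < n" by auto
    have "(Uh * U) $$ (i,j) = (\<Sum>v<n. cnj (u i v) * u j v)"
      using ij unfolding U_def Uh_def by (simp add: scalar_prod_def lessThan_atLeast0)
    also have "\<dots> = ipf n (u i) (u j)" unfolding ipf_def ..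
    finally show "(Uh * U) $$ (i,j) = 1\<^sub>m n $$ (i,j)" using orth ij by auto
  qed (auto simp: U_def Uh_def)
  from mat_mult_left_right_inverse[OF Uh U this] have UUh: "U * Uh = 1\<^sub>m n" .
  define H where "H = Uh * A * U"
  have H: "H \<in> carrier_mat n n" unfolding H_def using Uh A U by auto
  have PB: "P * B \<in> carrier_mat n n" using P B by simp
  have DB: "Dm * B \<in> carrier_mat n n" using Dm B by simp
  have BC: "B * Cm \<in> carrier_mat n n" using B Cm by simp
  have DBC: "Dm * B * Cm \<in> carrier_mat n n" using Dm B Cm by simp
  have PC: "P * Cm \<in> carrier_mat n n" using P Cm by simp
  have AU: "A * U = U * (Dm * B * Cm)"
  proof -
    have "A * U = P * B * Q * (P * Cm)" using AeqP UPC by simp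
    also have "\<dots> = P * B * (Q * (P * Cm))" by (rule assoc_mult_mat[OF PB Q PC])
    also have "Q * (P * Cm) = (Q * P) * Cm" by (rule assoc_mult_mat[OF Q P Cm, symmetric])
    also have "(Q * P) * Cm = Cm" using QP Cm by simp
    also have "P * B * Cm = U * Dm * B * Cm" using PUD by simp
    also have "U * Dm * B = U * (Dm * B)" by (rule assoc_mult_mat[OF U Dm B])
    also have "U * (Dm * B) * Cm = U * (Dm * B * Cm)" by (rule assoc_mult_mat[OF U DB Cm])
    finally show ?thesis .
  qed
  have HDBC: "H = Dm * B * Cm"
  proof -
    have "H = Uh * (A * U)" unfolding H_def by (rule assoc_mult_mat[OF Uh A U])
    also have "\<dots> = Uh * (U * (Dm * B * Cm))" unfolding AU ..
    also have "\<dots> = (Uh * U) * (Dm * B * Cm)" by (rule assoc_mult_mat[OF Uh U DBC, symmetric])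
    also have "\<dots> = Dm * B * Cm" using UhU left_mult_one_mat[OF DBC] by simp
    finally show ?thesis .
  qed
  have uH: "upper_triangular H" unfolding HDBC
    by (rule upper_tri_mult[OF _ Cm upper_tri_mult[OF Dm B uDm uB] uCm]) (use Dm B in simp)
  have Hent: "H $$ (i,j) = (\<Sum>l<n. (\<Sum>v<n. cnj (u i v) * A $$ (v,l)) * u j l)" if "i < n" "j < n" for i j
    using that A unfolding H_def U_def Uh_def by (simp add: scalar_prod_def lessThan_atLeast0)
  have Hherm: "H $$ (j,i) = cnj (H $$ (i,j))" if ij: "i < n" "j < n" for i j
  proof -
    have "cnj (H $$ (i,j)) = (\<Sum>l<n. \<Sum>v<n. u i v * cnj (A $$ (v,l)) * cnj (u j l))"
      unfolding Hent[OF ij] by (simp add: sum_distrib_right mult.assoc)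
    also have "\<dots> = (\<Sum>l<n. \<Sum>v<n. u i v * A $$ (l,v) * cnj (u j l))"
      using herm by (intro sum.cong refl) (metis complex_cnj_cnj lessThan_iff)
    also have "\<dots> = (\<Sum>v<n. \<Sum>l<n. cnj (u j l) * A $$ (l,v) * u i v)"
      by (subst sum.swap) (simp add: mult.commute mult.left_commute)
    also have "\<dots> = H $$ (j,i)" unfolding Hent[OF ij(2,1)] by (simp add: sum_distrib_right)
    finally show ?thesis by simp
  qed
  have Hdiag: "H $$ (i,j) = 0" if "i < n" "j < n" "i \<noteq> j" for i j
  proof (cases "j < i")
    case True
    then show ?thesis using uH that H by (auto simp: upper_triangular_def)
  next
    case False
    then have "i < j" using that by simp
    then have "H $$ (j,i) = 0" using uH that H by (auto simp: upper_triangular_def)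
    then show ?thesis using Hherm[OF that(1,2)] by simp
  qed
  have Hreal: "H $$ (j,j) = complex_of_real (Re (H $$ (j,j)))" if "j < n" for j
    using Hherm[OF that that] by (metis Reals_cnj_iff complex_is_Real_iff of_real_Re)
  have UH: "A * U = U * H"
  proof -
    have AU': "A * U \<in> carrier_mat n n" using A U by simp
    have "U * H = U * (Uh * (A * U))" unfolding H_def using assoc_mult_mat[OF Uh A U] by simp
    also have "\<dots> = (U * Uh) * (A * U)" by (rule assoc_mult_mat[OF U Uh AU', symmetric])
    also have "\<dots> = A * U" using UUh left_mult_one_mat[OF AU'] by simp
    finally show ?thesis by simp
  qed
  have "\<forall>j<n. \<forall>v<n. (\<Sum>v'<n. A $$ (v,v') * u j v') = complex_of_real (Re (H $$ (j,j))) * u j v"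
  proof (intro allI impI)
    fix j v assume j: "j < n" and v: "v < n"
    have "(\<Sum>v'<n. A $$ (v,v') * u j v') = (A * U) $$ (v,j)"
      using j v A unfolding U_def by (simp add: scalar_prod_def lessThan_atLeast0)
    also have "\<dots> = (U * H) $$ (v,j)" using UH by simp
    also have "\<dots> = (\<Sum>l<n. u l v * H $$ (l,j))"
      using j v H unfolding U_def by (simp add: scalar_prod_def lessThan_atLeast0)
    also have "\<dots> = (\<Sum>l<n. if l = j then u j v * H $$ (j,j) else 0)"
      by (rule sum.cong) (use Hdiag j in auto)
    also have "\<dots> = u j v * H $$ (j,j)" using j by simp
    finally show "(\<Sum>v'<n. A $$ (v,v') * u j v') = complex_of_real (Re (H $$ (j,j))) * u j v"
      using Hreal[OF j] by (simp add: mult.commute)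
  qed
  then show ?thesis using o by (intro exI[of _ u] exI[of _ "\<lambda>j. Re (H $$ (j,j))"] conjI)
qed

definition Mv :: "nat \<Rightarrow> ('x \<Rightarrow> nat \<Rightarrow> complex) \<Rightarrow> 'x set \<Rightarrow> (nat \<Rightarrow> complex) \<Rightarrow> nat \<Rightarrow> complex" where
  "Mv n \<phi> S y v = (\<Sum>x\<in>S. \<phi> x v * ipf n (\<phi> x) y)"

lemma ipf_sum_right: "ipf n a (\<lambda>v. \<Sum>x\<in>S. g x v) = (\<Sum>x\<in>S. ipf n a (g x))"
  unfolding ipf_def by (simp add: sum_distrib_left sum.swap[of _ S])

lemma ipf_sum_left: "ipf n (\<lambda>v. \<Sum>x\<in>S. g x v) b = (\<Sum>x\<in>S. ipf n (g x) b)"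
  unfolding ipf_def by (simp add: sum_distrib_right sum.swap[of _ S])

lemma ipf_scal_right: "ipf n a (\<lambda>v. c * g v) = c * ipf n a g"
  unfolding ipf_def by (simp add: sum_distrib_left mult.left_commute)

lemma ipf_scal_left: "ipf n (\<lambda>v. c * g v) b = cnj c * ipf n g b"
  unfolding ipf_def by (simp add: sum_distrib_left mult.assoc)

lemma Mv_alt: "Mv n \<phi> S z = (\<lambda>v. \<Sum>x\<in>S. ipf n (\<phi> x) z * \<phi> x v)"
  unfolding Mv_def by (auto intro!: ext sum.cong simp: mult.commute)

lemma ipf_Mv_right: "ipf n a (Mv n \<phi> S z) = (\<Sum>x\<in>S. ipf n a (\<phi> x) * ipf n (\<phi> x) z)"
  unfolding Mv_alt ipf_sum_right ipf_scal_right by (simp add: mult.commute)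

lemma ipf_Mv_left: "ipf n (Mv n \<phi> S y) z = (\<Sum>x\<in>S. ipf n y (\<phi> x) * ipf n (\<phi> x) z)"
  unfolding Mv_alt ipf_sum_left ipf_scal_left by (simp add: ipf_cnj[of n y])

lemma ipf_cong: "(\<And>v. v < n \<Longrightarrow> a v = a' v) \<Longrightarrow> (\<And>v. v < n \<Longrightarrow> b v = b' v) \<Longrightarrow> ipf n a b = ipf n a' b'"
  unfolding ipf_def by (intro sum.cong) auto

lemma ipf_norm: "ipf n (\<phi> x) z * ipf n z (\<phi> x) = complex_of_real ((cmod (ipf n (\<phi> x) z))^2)"
  using ipf_cnj[of n z "\<phi> x"] complex_norm_square by metis

lemma parseval:
  assumes "onb n e"
  shows "ipf n a b = (\<Sum>j<n. ipf n a (e j) * ipf n (e j) b)"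
proof -
  have "(\<Sum>j<n. ipf n a (e j) * ipf n (e j) b)
      = (\<Sum>j<n. \<Sum>v<n. \<Sum>v'<n. cnj (a v) * b v' * (e j v * cnj (e j v')))"
    unfolding ipf_def sum_product by (intro sum.cong refl) (simp add: mult_ac)
  also have "\<dots> = (\<Sum>v<n. \<Sum>j<n. \<Sum>v'<n. cnj (a v) * b v' * (e j v * cnj (e j v')))"
    by (rule sum.swap)
  also have "\<dots> = (\<Sum>v<n. \<Sum>v'<n. \<Sum>j<n. cnj (a v) * b v' * (e j v * cnj (e j v')))"
    by (rule sum.cong[OF refl], rule sum.swap)
  also have "\<dots> = (\<Sum>v<n. \<Sum>v'<n. cnj (a v) * b v' * (\<Sum>j<n. e j v * cnj (e j v')))"
    by (simp add: sum_distrib_left)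
  also have "\<dots> = (\<Sum>v<n. \<Sum>v'<n. if v = v' then cnj (a v) * b v' else 0)"
    by (intro sum.cong refl) (simp add: onb_complete[OF assms])
  also have "\<dots> = ipf n a b" unfolding ipf_def by simp
  finally show ?thesis by simp
qed

lemma parseval_norm:
  assumes "onb n e"
  shows "ipf n a a = complex_of_real (\<Sum>j<n. (cmod (ipf n (e j) a))^2)"
  unfolding parseval[OF assms, of a a] of_real_sum
  by (intro sum.cong refl) (metis ipf_cnj complex_norm_square mult.commute)

lemma mult_cnj_sq: "z * cnj z = (complex_of_real (cmod z))^2"
  using complex_norm_square[of z] by simp

lemma cnj_mult_sq: "cnj z * z = (complex_of_real (cmod z))^2"
  using complex_norm_square[of z] by (simp add: mult.commute)

locale cqsetup =
  fixes n :: nat and S :: "'x set" and \<phi> :: "'x \<Rightarrow> nat \<Rightarrow> complex" and cls :: "'x \<Rightarrow> nat" and K :: nat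
    and e :: "nat \<Rightarrow> nat \<Rightarrow> complex" and lam :: "nat \<Rightarrow> real"
    and f :: "nat \<Rightarrow> nat \<Rightarrow> nat \<Rightarrow> complex" and mu :: "nat \<Rightarrow> nat \<Rightarrow> real"
  assumes finS: "finite S" and clsK: "\<And>x. x \<in> S \<Longrightarrow> cls x < K"
    and onb_e: "onb n e"
    and eig_e: "\<And>j v. j < n \<Longrightarrow> v < n \<Longrightarrow> Mv n \<phi> S (e j) v = complex_of_real (lam j) * e j v"
    and onb_f: "\<And>t. t < K \<Longrightarrow> onb n (f t)"
    and eig_f: "\<And>t i v. t < K \<Longrightarrow> i < n \<Longrightarrow> v < n \<Longrightarrow>
        Mv n \<phi> {x\<in>S. cls x = t} (f t i) v = complex_of_real (mu t i) * f t i v"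
begin

definition a :: "nat \<Rightarrow> nat \<Rightarrow> nat \<Rightarrow> complex" where
  "a t i j = ipf n (f t i) (e j)"

definition c :: "nat \<Rightarrow> nat \<Rightarrow> nat \<Rightarrow> real" where
  "c t i j = mu t i * (cmod (a t i j))^2 / lam j"

lemma e_unit: "j < n \<Longrightarrow> ipf n (e j) (e j) = 1"
  using onb_e unfolding onb_def by auto

lemma f_unit: "t < K \<Longrightarrow> i < n \<Longrightarrow> ipf n (f t i) (f t i) = 1"
  using onb_f unfolding onb_def by auto

lemma ip_eig_e_right: "j < n \<Longrightarrow> ipf n y (Mv n \<phi> S (e j)) = complex_of_real (lam j) * ipf n y (e j)"
  by (subst ipf_cong[of n y y _ "\<lambda>v. complex_of_real (lam j) * e j v"]) (auto simp: eig_e ipf_scal_right)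

lemma ip_eig_e_left: "j < n \<Longrightarrow> ipf n (Mv n \<phi> S (e j)) z = complex_of_real (lam j) * ipf n (e j) z"
  by (subst ipf_cong[of n _ "\<lambda>v. complex_of_real (lam j) * e j v" z z]) (auto simp: eig_e ipf_scal_left)

lemma ip_eig_f_left: "t < K \<Longrightarrow> i < n \<Longrightarrow>
    ipf n (Mv n \<phi> {x\<in>S. cls x = t} (f t i)) z = complex_of_real (mu t i) * ipf n (f t i) z"
  by (subst ipf_cong[of n _ "\<lambda>v. complex_of_real (mu t i) * f t i v" z z]) (auto simp: eig_f ipf_scal_left)

lemma Mv_self: "ipf n y (Mv n \<phi> T y) = complex_of_real (\<Sum>x\<in>T. (cmod (ipf n (\<phi> x) y))^2)"
  unfolding ipf_Mv_right of_real_sum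
  by (intro sum.cong refl) (metis ipf_norm mult.commute)

lemma lam_eq: "j < n \<Longrightarrow> lam j = (\<Sum>x\<in>S. (cmod (ipf n (\<phi> x) (e j)))^2)"
proof -
  assume j: "j < n"
  have 1: "ipf n (e j) (Mv n \<phi> S (e j)) = complex_of_real (lam j)"
    using ip_eig_e_right[OF j, of "e j"] e_unit[OF j] by simp
  have "complex_of_real (lam j) = complex_of_real (\<Sum>x\<in>S. (cmod (ipf n (\<phi> x) (e j)))^2)"
    unfolding 1[symmetric] by (rule Mv_self)
  then show ?thesis by (simp only: of_real_eq_iff)
qed

lemma lam_nonneg: "j < n \<Longrightarrow> lam j \<ge> 0"
  by (simp add: lam_eq sum_nonneg)

lemma lam0: "j < n \<Longrightarrow> lam j = 0 \<Longrightarrow> x \<in> S \<Longrightarrow> ipf n (\<phi> x) (e j) = 0"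
  using lam_eq[of j] finS by (simp add: sum_nonneg_eq_0_iff)

lemma mu_eq: "t < K \<Longrightarrow> i < n \<Longrightarrow> mu t i = (\<Sum>x\<in>{x\<in>S. cls x = t}. (cmod (ipf n (\<phi> x) (f t i)))^2)"
proof -
  assume ti: "t < K" "i < n"
  have "ipf n (f t i) (Mv n \<phi> {x\<in>S. cls x = t} (f t i)) = cnj (ipf n (Mv n \<phi> {x\<in>S. cls x = t} (f t i)) (f t i))"
    by (rule ipf_cnj)
  also have "\<dots> = complex_of_real (mu t i)" using ip_eig_f_left[OF ti] f_unit[OF ti] by simp
  finally have 1: "ipf n (f t i) (Mv n \<phi> {x\<in>S. cls x = t} (f t i)) = complex_of_real (mu t i)" .
  have "complex_of_real (mu t i) = complex_of_real (\<Sum>x\<in>{x\<in>S. cls x = t}. (cmod (ipf n (\<phi> x) (f t i)))^2)"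
    unfolding 1[symmetric] by (rule Mv_self)
  then show ?thesis by (simp only: of_real_eq_iff)
qed

lemma mu_nonneg: "t < K \<Longrightarrow> i < n \<Longrightarrow> mu t i \<ge> 0"
  by (simp add: mu_eq sum_nonneg)

lemma mu_a: "t < K \<Longrightarrow> i < n \<Longrightarrow>
   complex_of_real (mu t i) * a t i j = (\<Sum>x\<in>{x\<in>S. cls x = t}. ipf n (f t i) (\<phi> x) * ipf n (\<phi> x) (e j))"
  unfolding a_def using ip_eig_f_left[of t i "e j"] ipf_Mv_left[of n \<phi> _ "f t i" "e j"] by simp

lemma F3: "t < K \<Longrightarrow> i < n \<Longrightarrow> j < n \<Longrightarrow> lam j = 0 \<Longrightarrow> complex_of_real (mu t i) * a t i j = 0"
  unfolding mu_a by (intro sum.neutral) (auto simp: lam0)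

lemma c_nonneg: "t < K \<Longrightarrow> i < n \<Longrightarrow> j < n \<Longrightarrow> c t i j \<ge> 0"
  unfolding c_def using mu_nonneg lam_nonneg by simp

lemma sum_a_sq: "t < K \<Longrightarrow> i < n \<Longrightarrow> (\<Sum>j<n. (cmod (a t i j))^2) = 1"
proof -
  assume ti: "t < K" "i < n"
  have "complex_of_real (\<Sum>j<n. (cmod (ipf n (e j) (f t i)))^2) = ipf n (f t i) (f t i)"
    by (rule parseval_norm[OF onb_e, symmetric])
  also have "\<dots> = 1" by (rule f_unit[OF ti])
  finally have 1: "(\<Sum>j<n. (cmod (ipf n (e j) (f t i)))^2) = 1" by (simp only: of_real_eq_1_iff)
  have "cmod (ipf n (e j) (f t i)) = cmod (a t i j)" for j
    unfolding a_def by (subst ipf_cnj) simp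
  then show ?thesis using 1 by simp
qed

lemma F4: "t < K \<Longrightarrow> i < n \<Longrightarrow> (\<Sum>j<n. c t i j * lam j) = mu t i"
proof -
  assume ti: "t < K" "i < n"
  have "c t i j * lam j = mu t i * (cmod (a t i j))^2" if j: "j < n" for j
  proof (cases "lam j = 0")
    case True
    from F3[OF ti j True] have "mu t i = 0 \<or> a t i j = 0" by simp
    then show ?thesis using True unfolding c_def by auto
  next
    case False
    then show ?thesis unfolding c_def by simp
  qed
  then have "(\<Sum>j<n. c t i j * lam j) = (\<Sum>j<n. mu t i * (cmod (a t i j))^2)" by simp
  also have "\<dots> = mu t i * (\<Sum>j<n. (cmod (a t i j))^2)" by (rule sum_distrib_left[symmetric])
  also have "\<dots> = mu t i" using sum_a_sq[OF ti] by simp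
  finally show ?thesis .
qed

lemma ip_e_Mvt: "t < K \<Longrightarrow> j < n \<Longrightarrow>
   ipf n (e j) (Mv n \<phi> {x\<in>S. cls x = t} (e j)) = complex_of_real (\<Sum>i<n. mu t i * (cmod (a t i j))^2)"
proof -
  assume tj: "t < K" "j < n"
  let ?St = "{x\<in>S. cls x = t}"
  have "ipf n (e j) (Mv n \<phi> ?St (e j)) = (\<Sum>i<n. ipf n (e j) (f t i) * ipf n (f t i) (Mv n \<phi> ?St (e j)))"
    by (rule parseval[OF onb_f[OF tj(1)]])
  also have "\<dots> = (\<Sum>i<n. complex_of_real (mu t i * (cmod (a t i j))^2))"
  proof (rule sum.cong[OF refl])
    fix i assume "i \<in> {..<n}"
    then have i: "i < n" by simp
    have "ipf n (f t i) (Mv n \<phi> ?St (e j)) = ipf n (Mv n \<phi> ?St (f t i)) (e j)"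
      unfolding ipf_Mv_left ipf_Mv_right ..
    also have "\<dots> = complex_of_real (mu t i) * a t i j" unfolding a_def using ip_eig_f_left[OF tj(1) i] .
    finally have 1: "ipf n (f t i) (Mv n \<phi> ?St (e j)) = complex_of_real (mu t i) * a t i j" .
    have 2: "ipf n (e j) (f t i) = cnj (a t i j)" unfolding a_def by (rule ipf_cnj)
    show "ipf n (e j) (f t i) * ipf n (f t i) (Mv n \<phi> ?St (e j)) = complex_of_real (mu t i * (cmod (a t i j))^2)"
      unfolding 1 2 by (simp add: cnj_mult_sq mult_cnj_sq mult_ac)
  qed
  finally show ?thesis by simp
qed

lemma F6: "j < n \<Longrightarrow> lam j > 0 \<Longrightarrow> (\<Sum>t<K. \<Sum>i<n. c t i j) = 1"
proof -
  assume j: "j < n" and lp: "lam j > 0"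
  have "(\<Sum>t<K. complex_of_real (\<Sum>i<n. mu t i * (cmod (a t i j))^2))
      = (\<Sum>t<K. ipf n (e j) (Mv n \<phi> {x\<in>S. cls x = t} (e j)))"
    using ip_e_Mvt[OF _ j] by simp
  also have "\<dots> = (\<Sum>t<K. \<Sum>x\<in>{x\<in>S. cls x = t}. ipf n (e j) (\<phi> x) * ipf n (\<phi> x) (e j))"
    unfolding ipf_Mv_right ..
  also have "\<dots> = (\<Sum>x\<in>S. ipf n (e j) (\<phi> x) * ipf n (\<phi> x) (e j))"
    by (rule sum.group) (use finS clsK in auto)
  also have "\<dots> = ipf n (e j) (Mv n \<phi> S (e j))" unfolding ipf_Mv_right ..
  also have "\<dots> = complex_of_real (lam j)" using ip_eig_e_right[OF j, of "e j"] e_unit[OF j] by simp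
  finally have "complex_of_real (\<Sum>t<K. \<Sum>i<n. mu t i * (cmod (a t i j))^2) = complex_of_real (lam j)"
    by (simp only: of_real_sum)
  then have "(\<Sum>t<K. \<Sum>i<n. mu t i * (cmod (a t i j))^2) = lam j"
    by (simp only: of_real_eq_iff)
  moreover have "(\<Sum>t<K. \<Sum>i<n. c t i j) = (\<Sum>t<K. \<Sum>i<n. mu t i * (cmod (a t i j))^2) / lam j"
    unfolding c_def by (simp only: sum_divide_distrib)
  ultimately show ?thesis using lp by simp
qed

end

definition ipS :: "'x set \<Rightarrow> ('x \<Rightarrow> complex) \<Rightarrow> ('x \<Rightarrow> complex) \<Rightarrow> complex" where
  "ipS S g h = (\<Sum>x\<in>S. cnj (g x) * h x)"

lemma ipS_cnj: "ipS S h g = cnj (ipS S g h)"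
  unfolding ipS_def by (simp add: mult.commute)

lemma ipS_self: "ipS S g g = complex_of_real (\<Sum>x\<in>S. (cmod (g x))^2)"
  unfolding ipS_def of_real_sum by (intro sum.cong refl) (simp add: cnj_mult_sq)

lemma ipS_sum_left: "ipS S (\<lambda>x. \<Sum>j\<in>J. k j * g j x) h = (\<Sum>j\<in>J. cnj (k j) * ipS S (g j) h)"
  unfolding ipS_def by (simp add: sum_distrib_left sum_distrib_right sum.swap[of _ S] mult_ac)

lemma ipS_sum_right: "ipS S h (\<lambda>x. \<Sum>j\<in>J. k j * g j x) = (\<Sum>j\<in>J. k j * ipS S h (g j))"
  unfolding ipS_def by (simp add: sum_distrib_left sum_distrib_right sum.swap[of _ S] mult_ac)

lemma ipS_diff: "ipS S (\<lambda>x. g1 x - g2 x) (\<lambda>x. h1 x - h2 x)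
   = ipS S g1 h1 - ipS S g1 h2 - ipS S g2 h1 + ipS S g2 h2"
  unfolding ipS_def by (simp add: sum_subtractf[symmetric] sum.distrib[symmetric] algebra_simps)

lemma ipS_self_nonneg: "Re (ipS S g g) \<ge> 0"
  unfolding ipS_self by (simp add: sum_nonneg)

lemma bessel_gen:
  fixes \<beta> :: "nat \<Rightarrow> 'x \<Rightarrow> complex" and l :: "nat \<Rightarrow> real"
  assumes orth: "\<And>j j'. j < n \<Longrightarrow> j' < n \<Longrightarrow> ipS S (\<beta> j) (\<beta> j') = (if j = j' then complex_of_real (l j) else 0)"
  shows "(\<Sum>j<n. (cmod (ipS S (\<beta> j) \<gamma>))^2 / l j) \<le> Re (ipS S \<gamma> \<gamma>)"
proof -
  define Q where "Q = (\<Sum>j<n. (cmod (ipS S (\<beta> j) \<gamma>))^2 / l j)"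
  define \<kappa> where "\<kappa> j = ipS S (\<beta> j) \<gamma> / complex_of_real (l j)" for j
  define s where "s x = (\<Sum>j<n. \<kappa> j * \<beta> j x)" for x
  have s_def': "s = (\<lambda>x. \<Sum>j\<in>{..<n}. \<kappa> j * \<beta> j x)" unfolding s_def by simp
  have sg: "ipS S s \<gamma> = complex_of_real Q"
  proof -
    have "ipS S s \<gamma> = (\<Sum>j<n. cnj (\<kappa> j) * ipS S (\<beta> j) \<gamma>)"
      unfolding s_def' ipS_sum_left ..
    also have "\<dots> = (\<Sum>j<n. complex_of_real ((cmod (ipS S (\<beta> j) \<gamma>))^2 / l j))"
      by (intro sum.cong refl) (simp add: \<kappa>_def cnj_mult_sq)
    finally show ?thesis unfolding Q_def of_real_sum .
  qed
  have ss: "ipS S s s = complex_of_real Q"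
  proof -
    have "ipS S s s = (\<Sum>j<n. cnj (\<kappa> j) * ipS S (\<beta> j) s)"
      unfolding s_def'[of] ipS_sum_left ..
    also have "\<dots> = (\<Sum>j<n. cnj (\<kappa> j) * (\<Sum>j'<n. \<kappa> j' * ipS S (\<beta> j) (\<beta> j')))"
      unfolding s_def' ipS_sum_right ..
    also have "\<dots> = (\<Sum>j<n. cnj (\<kappa> j) * (\<kappa> j * complex_of_real (l j)))"
    proof (intro sum.cong refl)
      fix j assume "j \<in> {..<n}"
      then have j: "j < n" by simp
      have "(\<Sum>j'<n. \<kappa> j' * ipS S (\<beta> j) (\<beta> j')) = (\<Sum>j'<n. if j' = j then \<kappa> j * complex_of_real (l j) else 0)"
        by (intro sum.cong refl) (simp add: orth j)
      also have "\<dots> = \<kappa> j * complex_of_real (l j)" using j by simp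
      finally show "cnj (\<kappa> j) * (\<Sum>j'<n. \<kappa> j' * ipS S (\<beta> j) (\<beta> j')) = cnj (\<kappa> j) * (\<kappa> j * complex_of_real (l j))"
        by simp
    qed
    also have "\<dots> = (\<Sum>j<n. complex_of_real ((cmod (ipS S (\<beta> j) \<gamma>))^2 / l j))"
    proof (intro sum.cong refl)
      fix j assume "j \<in> {..<n}"
      show "cnj (\<kappa> j) * (\<kappa> j * complex_of_real (l j)) = complex_of_real ((cmod (ipS S (\<beta> j) \<gamma>))^2 / l j)"
      proof (cases "l j = 0")
        case True
        then show ?thesis by (simp add: \<kappa>_def)
      next
        case False
        have "cnj (\<kappa> j) * (\<kappa> j * complex_of_real (l j)) = (cnj (\<kappa> j) * \<kappa> j) * complex_of_real (l j)"
          by (simp add: mult_ac)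
        also have "\<dots> = complex_of_real ((cmod (\<kappa> j))^2 * l j)" by (simp add: cnj_mult_sq)
        also have "(cmod (\<kappa> j))^2 * l j = (cmod (ipS S (\<beta> j) \<gamma>))^2 / l j"
          using False by (simp add: \<kappa>_def norm_divide power_divide power2_eq_square)
        finally show ?thesis .
      qed
    qed
    finally show ?thesis unfolding Q_def of_real_sum .
  qed
  have gs: "ipS S \<gamma> s = complex_of_real Q" using sg ipS_cnj[of S \<gamma> s] by simp
  have "ipS S (\<lambda>x. s x - \<gamma> x) (\<lambda>x. s x - \<gamma> x) = complex_of_real Q - complex_of_real Q - complex_of_real Q + ipS S \<gamma> \<gamma>"
    unfolding ipS_diff sg ss gs ..
  then have "Re (ipS S (\<lambda>x. s x - \<gamma> x) (\<lambda>x. s x - \<gamma> x)) = Re (ipS S \<gamma> \<gamma>) - Q" by simp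
  with ipS_self_nonneg[of S "\<lambda>x. s x - \<gamma> x"] show ?thesis unfolding Q_def by simp
qed

context cqsetup
begin

lemma F5: "t < K \<Longrightarrow> i < n \<Longrightarrow> (\<Sum>j<n. c t i j) \<le> 1"
proof -
  assume ti: "t < K" "i < n"
  define \<beta> where "\<beta> j x = ipf n (\<phi> x) (e j)" for j x
  define \<gamma> where "\<gamma> x = (if cls x = t then ipf n (\<phi> x) (f t i) else 0)" for x
  have orth: "ipS S (\<beta> j) (\<beta> j') = (if j = j' then complex_of_real (lam j) else 0)"
    if "j < n" "j' < n" for j j'
  proof -
    have "ipS S (\<beta> j) (\<beta> j') = (\<Sum>x\<in>S. ipf n (e j) (\<phi> x) * ipf n (\<phi> x) (e j'))"
      unfolding ipS_def \<beta>_def by (intro sum.cong refl) (simp add: ipf_cnj[of n "e j"])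
    also have "\<dots> = ipf n (e j) (Mv n \<phi> S (e j'))" unfolding ipf_Mv_right ..
    also have "\<dots> = complex_of_real (lam j') * ipf n (e j) (e j')" by (rule ip_eig_e_right[OF that(2)])
    finally show ?thesis using onb_e that unfolding onb_def by auto
  qed
  have bg: "ipS S (\<beta> j) \<gamma> = cnj (complex_of_real (mu t i) * a t i j)" if j: "j < n" for j
  proof -
    have "ipS S (\<beta> j) \<gamma> = (\<Sum>x\<in>S. if cls x = t then ipf n (e j) (\<phi> x) * ipf n (\<phi> x) (f t i) else 0)"
      unfolding ipS_def \<beta>_def \<gamma>_def by (intro sum.cong refl) (simp add: ipf_cnj[of n "e j"])
    also have "\<dots> = (\<Sum>x\<in>{x\<in>S. cls x = t}. ipf n (e j) (\<phi> x) * ipf n (\<phi> x) (f t i))"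
      by (rule sum.inter_filter[symmetric]) (rule finS)
    also have "\<dots> = ipf n (e j) (Mv n \<phi> {x\<in>S. cls x = t} (f t i))" unfolding ipf_Mv_right ..
    also have "\<dots> = cnj (ipf n (Mv n \<phi> {x\<in>S. cls x = t} (f t i)) (e j))" by (rule ipf_cnj)
    also have "\<dots> = cnj (complex_of_real (mu t i) * a t i j)"
      unfolding a_def using ip_eig_f_left[OF ti] by simp
    finally show ?thesis .
  qed
  have gg: "Re (ipS S \<gamma> \<gamma>) = mu t i"
  proof -
    have "ipS S \<gamma> \<gamma> = complex_of_real (\<Sum>x\<in>S. (cmod (\<gamma> x))^2)" by (rule ipS_self)
    moreover have "(\<Sum>x\<in>S. (cmod (\<gamma> x))^2) = (\<Sum>x\<in>S. if cls x = t then (cmod (ipf n (\<phi> x) (f t i)))^2 else 0)"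
      by (intro sum.cong refl) (simp add: \<gamma>_def)
    moreover have "\<dots> = (\<Sum>x\<in>{x\<in>S. cls x = t}. (cmod (ipf n (\<phi> x) (f t i)))^2)"
      by (rule sum.inter_filter[symmetric]) (rule finS)
    ultimately show ?thesis using mu_eq[OF ti] by simp
  qed
  have B0: "(\<Sum>j<n. (cmod (ipS S (\<beta> j) \<gamma>))^2 / lam j) \<le> Re (ipS S \<gamma> \<gamma>)"
    by (rule bessel_gen[of n S \<beta> lam \<gamma>, OF orth])
  then have B: "(\<Sum>j<n. (cmod (ipS S (\<beta> j) \<gamma>))^2 / lam j) \<le> mu t i" unfolding gg .
  have "(\<Sum>j<n. (cmod (ipS S (\<beta> j) \<gamma>))^2 / lam j) = mu t i * (\<Sum>j<n. c t i j)"
    unfolding sum_distrib_left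
  proof (intro sum.cong refl)
    fix j assume "j \<in> {..<n}"
    then have j: "j < n" by simp
    have "(cmod (ipS S (\<beta> j) \<gamma>))^2 = (mu t i)^2 * (cmod (a t i j))^2"
      unfolding bg[OF j] using mu_nonneg[OF ti] by (simp add: norm_mult power_mult_distrib)
    then show "(cmod (ipS S (\<beta> j) \<gamma>))^2 / lam j = mu t i * c t i j"
      unfolding c_def by (simp add: power2_eq_square)
  qed
  with B have M: "mu t i * (\<Sum>j<n. c t i j) \<le> mu t i" by linarith
  show ?thesis
  proof (cases "mu t i = 0")
    case True
    then show ?thesis unfolding c_def by simp
  next
    case False
    then have "mu t i > 0" using mu_nonneg[OF ti] by simp
    with M show ?thesis by (simp add: mult_le_cancel_left1)
  qed
qed

definition L :: "real \<Rightarrow> real" where "L x = x * ln x"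
definition Dv :: "real \<Rightarrow> real \<Rightarrow> real" where "Dv l m = l * ln l - l * ln m - l + m"

lemma Dv_nonneg: "l \<ge> 0 \<Longrightarrow> m > 0 \<Longrightarrow> Dv l m \<ge> 0"
proof -
  assume l: "l \<ge> 0" and m: "m > 0"
  show ?thesis
  proof (cases "l = 0")
    case True
    then show ?thesis using m unfolding Dv_def by simp
  next
    case False
    then have lp: "l > 0" using l by simp
    have "ln (m / l) \<le> m / l - 1" using ln_le_minus_one[of "m / l"] lp m by simp
    then have "l * ln (m / l) \<le> l * (m / l - 1)" using lp by (simp add: mult_left_mono)
    then have "l * (ln m - ln l) \<le> m - l" using lp m by (simp add: ln_div right_diff_distrib)
    then show ?thesis unfolding Dv_def by (simp add: algebra_simps)
  qed
qed

lemma Dv_zero: "l > 0 \<Longrightarrow> m > 0 \<Longrightarrow> Dv l m = 0 \<Longrightarrow> l = m"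
proof -
  assume lp: "l > 0" and m: "m > 0" and D: "Dv l m = 0"
  have "l * (ln m - ln l) = m - l" using D unfolding Dv_def by (simp add: algebra_simps)
  then have "l * ln (m / l) = l * (m / l - 1)" using lp m by (simp add: ln_div right_diff_distrib)
  then have "ln (m / l) = m / l - 1" using lp by simp
  from ln_eq_minus_one[OF _ this] lp m have "m / l = 1" by simp
  then show ?thesis using lp by simp
qed

definition T :: "nat \<Rightarrow> nat \<Rightarrow> real" where
  "T t i = (\<Sum>j<n. c t i j * L (lam j)) - L (mu t i)"

lemma T_formula: "t < K \<Longrightarrow> i < n \<Longrightarrow> mu t i > 0 \<Longrightarrow>
   T t i = (\<Sum>j<n. c t i j * Dv (lam j) (mu t i)) + (1 - (\<Sum>j<n. c t i j)) * mu t i"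
proof -
  assume ti: "t < K" "i < n" and mp: "mu t i > 0"
  let ?m = "mu t i"
  have "(\<Sum>j<n. c t i j * L (lam j))
      = (\<Sum>j<n. c t i j * Dv (lam j) ?m + ln ?m * (c t i j * lam j) + c t i j * lam j - ?m * c t i j)"
    by (intro sum.cong refl) (simp add: L_def Dv_def algebra_simps)
  also have "\<dots> = (\<Sum>j<n. c t i j * Dv (lam j) ?m) + ln ?m * (\<Sum>j<n. c t i j * lam j)
      + (\<Sum>j<n. c t i j * lam j) - ?m * (\<Sum>j<n. c t i j)"
    by (simp add: sum.distrib sum_subtractf sum_distrib_left)
  also have "\<dots> = (\<Sum>j<n. c t i j * Dv (lam j) ?m) + ln ?m * ?m + ?m - ?m * (\<Sum>j<n. c t i j)"
    using F4[OF ti] by simp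
  finally show ?thesis unfolding T_def L_def by (simp add: algebra_simps)
qed

lemma c_mu0: "mu t i = 0 \<Longrightarrow> c t i j = 0"
  unfolding c_def by simp

lemma T_mu0: "mu t i = 0 \<Longrightarrow> T t i = 0"
  unfolding T_def L_def by (simp add: c_mu0)

lemma T_nonneg: "t < K \<Longrightarrow> i < n \<Longrightarrow> T t i \<ge> 0"
proof -
  assume ti: "t < K" "i < n"
  show ?thesis
  proof (cases "mu t i = 0")
    case True
    then show ?thesis by (simp add: T_mu0)
  next
    case False
    then have mp: "mu t i > 0" using mu_nonneg[OF ti] by simp
    have "(\<Sum>j<n. c t i j * Dv (lam j) (mu t i)) \<ge> 0"
      by (intro sum_nonneg mult_nonneg_nonneg c_nonneg[OF ti] Dv_nonneg lam_nonneg mp) auto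
    moreover have "(1 - (\<Sum>j<n. c t i j)) * mu t i \<ge> 0" using F5[OF ti] mp by simp
    ultimately show ?thesis using T_formula[OF ti mp] by simp
  qed
qed

lemma total_identity:
  "(\<Sum>j<n. L (lam j)) - (\<Sum>t<K. \<Sum>i<n. L (mu t i)) = (\<Sum>t<K. \<Sum>i<n. T t i)"
proof -
  have "(\<Sum>j<n. L (lam j)) = (\<Sum>j<n. (\<Sum>t<K. \<Sum>i<n. c t i j) * L (lam j))"
  proof (intro sum.cong refl)
    fix j assume "j \<in> {..<n}"
    then have j: "j < n" by simp
    show "L (lam j) = (\<Sum>t<K. \<Sum>i<n. c t i j) * L (lam j)"
    proof (cases "lam j = 0")
      case True
      then show ?thesis by (simp add: L_def)
    next
      case False
      then have "lam j > 0" using lam_nonneg[OF j] by simp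
      then show ?thesis using F6[OF j] by simp
    qed
  qed
  also have "\<dots> = (\<Sum>j<n. \<Sum>t<K. \<Sum>i<n. c t i j * L (lam j))"
    by (simp only: sum_distrib_right)
  also have "\<dots> = (\<Sum>t<K. \<Sum>j<n. \<Sum>i<n. c t i j * L (lam j))"
    by (rule sum.swap)
  also have "\<dots> = (\<Sum>t<K. \<Sum>i<n. \<Sum>j<n. c t i j * L (lam j))"
    by (rule sum.cong[OF refl], rule sum.swap)
  finally have 1: "(\<Sum>j<n. L (lam j)) = (\<Sum>t<K. \<Sum>i<n. \<Sum>j<n. c t i j * L (lam j))" .
  have "(\<Sum>t<K. \<Sum>i<n. T t i) = (\<Sum>t<K. \<Sum>i<n. \<Sum>j<n. c t i j * L (lam j)) - (\<Sum>t<K. \<Sum>i<n. L (mu t i))"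
    unfolding T_def by (simp only: sum_subtractf)
  then show ?thesis using 1 by simp
qed

lemma eta_L: "x \<ge> 0 \<Longrightarrow> eta x = - L x / ln 2"
  unfolding eta_def L_def by (auto simp: log_def)

lemma main_ineq:
  "(\<Sum>t<K. \<Sum>i<n. eta (mu t i)) - (\<Sum>j<n. eta (lam j)) = (\<Sum>t<K. \<Sum>i<n. T t i) / ln 2"
proof -
  have e1: "(\<Sum>t<K. \<Sum>i<n. eta (mu t i)) = (- 1 / ln 2) * (\<Sum>t<K. \<Sum>i<n. L (mu t i))"
    unfolding sum_distrib_left by (intro sum.cong refl) (simp add: eta_L mu_nonneg)
  have e2: "(\<Sum>j<n. eta (lam j)) = (- 1 / ln 2) * (\<Sum>j<n. L (lam j))"
    unfolding sum_distrib_left by (intro sum.cong refl) (simp add: eta_L lam_nonneg)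
  have "ln (2::real) > 0" by simp
  then show ?thesis unfolding e1 e2 total_identity[symmetric] by (simp add: field_simps)
qed

lemma main_nonneg: "(\<Sum>t<K. \<Sum>i<n. T t i) \<ge> 0"
  by (intro sum_nonneg) (simp add: T_nonneg)

lemma T_zero_Dv: "t < K \<Longrightarrow> i < n \<Longrightarrow> mu t i > 0 \<Longrightarrow> T t i = 0 \<Longrightarrow> j < n \<Longrightarrow>
   c t i j * Dv (lam j) (mu t i) = 0"
proof -
  assume ti: "t < K" "i < n" and mp: "mu t i > 0" and T0: "T t i = 0" and j: "j < n"
  have nn: "\<forall>j\<in>{..<n}. c t i j * Dv (lam j) (mu t i) \<ge> 0"
    using c_nonneg[OF ti] Dv_nonneg lam_nonneg mp by auto
  have s0: "(\<Sum>j<n. c t i j * Dv (lam j) (mu t i)) \<ge> 0" using nn by (intro sum_nonneg) auto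
  have "(1 - (\<Sum>j<n. c t i j)) * mu t i \<ge> 0" using F5[OF ti] mp by simp
  then have "(\<Sum>j<n. c t i j * Dv (lam j) (mu t i)) = 0" using T_formula[OF ti mp] T0 s0 by linarith
  then have "\<forall>j\<in>{..<n}. c t i j * Dv (lam j) (mu t i) = 0"
    using nn by (subst (asm) sum_nonneg_eq_0_iff) auto
  then show ?thesis using j by blast
qed

lemma eig_match: "t < K \<Longrightarrow> i < n \<Longrightarrow> mu t i > 0 \<Longrightarrow> T t i = 0 \<Longrightarrow> j < n \<Longrightarrow> a t i j \<noteq> 0
   \<Longrightarrow> lam j = mu t i"
proof -
  assume ti: "t < K" "i < n" and mp: "mu t i > 0" and T0: "T t i = 0" and j: "j < n" and a0: "a t i j \<noteq> 0"
  have "lam j \<noteq> 0"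
  proof
    assume "lam j = 0"
    from F3[OF ti j this] mp a0 show False by simp
  qed
  then have lp: "lam j > 0" using lam_nonneg[OF j] by simp
  have "c t i j > 0" unfolding c_def using mp lp a0 by simp
  with T_zero_Dv[OF ti mp T0 j] have "Dv (lam j) (mu t i) = 0" by simp
  from Dv_zero[OF lp mp this] show ?thesis .
qed

lemma f_perp: "t < K \<Longrightarrow> i < n \<Longrightarrow> mu t i > 0 \<Longrightarrow> T t i = 0 \<Longrightarrow> x \<in> S \<Longrightarrow> cls x \<noteq> t
   \<Longrightarrow> ipf n (\<phi> x) (f t i) = 0"
proof -
  assume ti: "t < K" "i < n" and mp: "mu t i > 0" and T0: "T t i = 0" and x: "x \<in> S" "cls x \<noteq> t"
  let ?f = "f t i"
  have "ipf n ?f (Mv n \<phi> S ?f) = (\<Sum>j<n. ipf n ?f (e j) * ipf n (e j) (Mv n \<phi> S ?f))"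
    by (rule parseval[OF onb_e])
  also have "\<dots> = (\<Sum>j<n. complex_of_real (mu t i * (cmod (a t i j))^2))"
  proof (intro sum.cong refl)
    fix j assume "j \<in> {..<n}"
    then have j: "j < n" by simp
    have "ipf n (e j) (Mv n \<phi> S ?f) = ipf n (Mv n \<phi> S (e j)) ?f"
      unfolding ipf_Mv_left ipf_Mv_right ..
    also have "\<dots> = complex_of_real (lam j) * ipf n (e j) ?f" by (rule ip_eig_e_left[OF j])
    finally have 1: "ipf n (e j) (Mv n \<phi> S ?f) = complex_of_real (lam j) * cnj (a t i j)"
      unfolding a_def using ipf_cnj[of n ?f "e j"] by simp
    have 2: "ipf n ?f (e j) = a t i j" unfolding a_def ..
    show "ipf n ?f (e j) * ipf n (e j) (Mv n \<phi> S ?f) = complex_of_real (mu t i * (cmod (a t i j))^2)"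
    proof (cases "a t i j = 0")
      case True
      then show ?thesis unfolding 1 2 by simp
    next
      case False
      from eig_match[OF ti mp T0 j False] have "lam j = mu t i" .
      then show ?thesis unfolding 1 2 by (simp add: mult_cnj_sq mult_ac)
    qed
  qed
  also have "\<dots> = complex_of_real (mu t i * (\<Sum>j<n. (cmod (a t i j))^2))"
    by (simp only: of_real_sum sum_distrib_left)
  also have "\<dots> = complex_of_real (mu t i)" using sum_a_sq[OF ti] by simp
  finally have "complex_of_real (\<Sum>x\<in>S. (cmod (ipf n (\<phi> x) ?f))^2) = complex_of_real (mu t i)"
    unfolding Mv_self .
  then have tot: "(\<Sum>x\<in>S. (cmod (ipf n (\<phi> x) ?f))^2) = mu t i" by (simp only: of_real_eq_iff)
  have split: "S = {x\<in>S. cls x = t} \<union> {x\<in>S. cls x \<noteq> t}" by auto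
  have "(\<Sum>x\<in>S. (cmod (ipf n (\<phi> x) ?f))^2)
     = (\<Sum>x\<in>{x\<in>S. cls x = t}. (cmod (ipf n (\<phi> x) ?f))^2) + (\<Sum>x\<in>{x\<in>S. cls x \<noteq> t}. (cmod (ipf n (\<phi> x) ?f))^2)"
    by (subst split, rule sum.union_disjoint) (use finS in auto)
  then have "(\<Sum>x\<in>{x\<in>S. cls x \<noteq> t}. (cmod (ipf n (\<phi> x) ?f))^2) = 0"
    using tot mu_eq[OF ti] by simp
  then have "(cmod (ipf n (\<phi> x) ?f))^2 = 0"
    using x finS by (subst (asm) sum_nonneg_eq_0_iff) auto
  then show ?thesis by simp
qed

lemma f_perp0: "t < K \<Longrightarrow> i < n \<Longrightarrow> mu t i = 0 \<Longrightarrow> x \<in> S \<Longrightarrow> cls x = t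
   \<Longrightarrow> ipf n (\<phi> x) (f t i) = 0"
proof -
  assume ti: "t < K" "i < n" and m0: "mu t i = 0" and x: "x \<in> S" "cls x = t"
  have "(\<Sum>x\<in>{x\<in>S. cls x = t}. (cmod (ipf n (\<phi> x) (f t i)))^2) = 0" using mu_eq[OF ti] m0 by simp
  then have "(cmod (ipf n (\<phi> x) (f t i)))^2 = 0"
    using x finS by (subst (asm) sum_nonneg_eq_0_iff) auto
  then show ?thesis by simp
qed

lemma equality_orth:
  assumes T0: "(\<Sum>t<K. \<Sum>i<n. T t i) = 0" and x: "x \<in> S" and x': "x' \<in> S" and neq: "cls x \<noteq> cls x'"
  shows "ipf n (\<phi> x) (\<phi> x') = 0"
proof -
  have Tz: "T t i = 0" if "t < K" "i < n" for t i
  proof -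
    have "\<forall>t\<in>{..<K}. (\<Sum>i<n. T t i) = 0"
      using T0 by (subst (asm) sum_nonneg_eq_0_iff) (auto intro!: sum_nonneg T_nonneg)
    then have "(\<Sum>i<n. T t i) = 0" using that by auto
    then show ?thesis using that by (subst (asm) sum_nonneg_eq_0_iff) (auto intro!: T_nonneg)
  qed
  define t where "t = cls x'"
  have t: "t < K" unfolding t_def using clsK x' by simp
  have "ipf n (\<phi> x) (\<phi> x') = (\<Sum>i<n. ipf n (\<phi> x) (f t i) * ipf n (f t i) (\<phi> x'))"
    by (rule parseval[OF onb_f[OF t]])
  also have "\<dots> = 0"
  proof (intro sum.neutral ballI)
    fix i assume "i \<in> {..<n}"
    then have i: "i < n" by simp
    show "ipf n (\<phi> x) (f t i) * ipf n (f t i) (\<phi> x') = 0"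
    proof (cases "mu t i = 0")
      case True
      have "ipf n (\<phi> x') (f t i) = 0" using f_perp0[OF t i True x'] t_def by simp
      then have "ipf n (f t i) (\<phi> x') = 0" using ipf_cnj[of n "f t i" "\<phi> x'"] by simp
      then show ?thesis by simp
    next
      case False
      then have "mu t i > 0" using mu_nonneg[OF t i] by simp
      from f_perp[OF t i this Tz[OF t i] x] neq t_def show ?thesis by simp
    qed
  qed
  finally show ?thesis .
qed

end

lemma sum_blocks:
  fixes h :: "nat \<Rightarrow> 'a::comm_monoid_add"
  shows "(\<Sum>r<K*n. h r) = (\<Sum>t<K. \<Sum>v<n. h (t*n+v))"
proof (induction K)
  case 0
  then show ?case by simp
next
  case (Suc K)
  have "(\<Sum>r<Suc K*n. h r) = (\<Sum>r\<in>{0..<K*n+n}. h r)"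
    by (intro sum.cong) (auto simp: algebra_simps)
  also have "\<dots> = (\<Sum>r\<in>{0..<K*n}. h r) + (\<Sum>r\<in>{K*n..<K*n+n}. h r)"
    by (rule sum.atLeastLessThan_concat[symmetric]) auto
  also have "(\<Sum>r\<in>{K*n..<K*n+n}. h r) = (\<Sum>v<n. h (K*n+v))"
    using sum.shift_bounds_nat_ivl[of h 0 "K*n" n] by (simp add: lessThan_atLeast0 add.commute)
  also have "(\<Sum>r\<in>{0..<K*n}. h r) = (\<Sum>t<K. \<Sum>v<n. h (t*n+v))"
    using Suc by (simp add: lessThan_atLeast0)
  finally show ?case by simp
qed

lemma Mv_matrix:
  assumes "\<And>v v'. v < n \<Longrightarrow> v' < n \<Longrightarrow> M v v' = (\<Sum>x\<in>T. \<phi> x v * cnj (\<phi> x v'))" and "v < n"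
  shows "(\<Sum>v'<n. M v v' * y v') = Mv n \<phi> T y v"
proof -
  have "(\<Sum>v'<n. M v v' * y v') = (\<Sum>v'<n. \<Sum>x\<in>T. \<phi> x v * (cnj (\<phi> x v') * y v'))"
    using assms by (simp add: sum_distrib_right mult.assoc)
  also have "\<dots> = (\<Sum>x\<in>T. \<Sum>v'<n. \<phi> x v * (cnj (\<phi> x v') * y v'))" by (rule sum.swap)
  also have "\<dots> = Mv n \<phi> T y v" unfolding Mv_def ipf_def by (simp add: sum_distrib_left)
  finally show ?thesis .
qed

lemma sum_if_eq:
  fixes X :: "'a::comm_monoid_add" and k K :: nat
  assumes "k < K"
  shows "(\<Sum>t<K. if t = k \<and> t = k' then X else 0) = (if k = k' then X else 0)"
proof (cases "k = k'")
  case True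
  then have "(\<Sum>t<K. if t = k \<and> t = k' then X else 0) = (\<Sum>t<K. if t = k then X else 0)" by simp
  also have "\<dots> = X" using assms by simp
  finally show ?thesis using True by simp
next
  case False
  then show ?thesis by (intro trans[OF sum.neutral]) auto
qed

lemma divmod_block: "v < n \<Longrightarrow> (t * n + v) div n = t" "v < n \<Longrightarrow> (t * n + v) mod n = (v::nat)"
  by auto

lemma cq_state_entropy:
  fixes a :: "nat \<Rightarrow> nat \<Rightarrow> complex" and us :: "nat list" and g :: "nat \<Rightarrow> 'z"
    and f :: "nat \<Rightarrow> nat \<Rightarrow> nat \<Rightarrow> complex" and mu :: "nat \<Rightarrow> nat \<Rightarrow> real"
  defines "zs \<equiv> remdups (map g us)"
  assumes n: "n > 0"
    and onbf: "\<And>t. t < length zs \<Longrightarrow> onb n (f t)"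
    and eigf: "\<And>t i v. t < length zs \<Longrightarrow> i < n \<Longrightarrow> v < n \<Longrightarrow>
      (\<Sum>v'<n. cq_block m n a us g (zs ! t) $$ (v,v') * f t i v') = complex_of_real (mu t i) * f t i v"
  shows "vN_entropy (cq_state m n a us g) = (\<Sum>t<length zs. \<Sum>i<n. eta (mu t i))"
proof -
  define K where "K = length zs"
  have onbfK: "\<And>t. t < K \<Longrightarrow> onb n (f t)" using onbf unfolding K_def .
  have eigfK: "\<And>t i v. t < K \<Longrightarrow> i < n \<Longrightarrow> v < n \<Longrightarrow>
      (\<Sum>v'<n. cq_block m n a us g (zs ! t) $$ (v,v') * f t i v') = complex_of_real (mu t i) * f t i v"
    using eigf unfolding K_def .
  define C where "C = cq_state m n a us g"
  define B where "B t = cq_block m n a us g (zs ! t)" for t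
  have C: "C \<in> carrier_mat (K*n) (K*n)" unfolding C_def cq_state_def zs_def K_def Let_def by simp
  have Cent: "C $$ (r,r') = (if r div n = r' div n then B (r div n) $$ (r mod n, r' mod n) else 0)"
    if "r < K*n" "r' < K*n" for r r'
    using that unfolding C_def cq_state_def Let_def B_def zs_def K_def by simp
  define E where "E N r = (if r div n = N div n then f (N div n) (N mod n) (r mod n) else 0)" for N r
  define d where "d N = complex_of_real (mu (N div n) (N mod n))" for N
  have blockK: "N div n < K" if "N < K*n" for N
    using that n by (simp add: less_mult_imp_div_less)
  have onbE: "onb (K*n) E"
    unfolding onb_def
  proof (intro allI impI)
    fix N N' assume N: "N < K*n" and N': "N' < K*n"
    have "ipf (K*n) (E N) (E N') = (\<Sum>t<K. \<Sum>v<n. cnj (E N (t*n+v)) * E N' (t*n+v))"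
      unfolding ipf_def by (rule sum_blocks)
    also have "\<dots> = (\<Sum>t<K. if t = N div n \<and> t = N' div n then ipf n (f (N div n) (N mod n)) (f (N' div n) (N' mod n)) else 0)"
      by (intro sum.cong refl) (auto simp: E_def ipf_def)
    also have "\<dots> = (if N div n = N' div n then ipf n (f (N div n) (N mod n)) (f (N' div n) (N' mod n)) else 0)"
      by (rule sum_if_eq[OF blockK[OF N]])
    also have "\<dots> = (if N = N' then 1 else 0)"
    proof (cases "N div n = N' div n")
      case True
      have "N mod n < n" "N' mod n < n" using n by auto
      then have "ipf n (f (N div n) (N mod n)) (f (N div n) (N' mod n)) = (if N mod n = N' mod n then 1 else 0)"
        using onbfK[OF blockK[OF N]] unfolding onb_def by auto
      moreover have "(N mod n = N' mod n) = (N = N')" using True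
        by (metis div_mult_mod_eq)
      ultimately show ?thesis using True by simp
    next
      case False
      then show ?thesis by auto
    qed
    finally show "ipf (K*n) (E N) (E N') = (if N = N' then 1 else 0)" .
  qed
  have eigE: "(\<Sum>r'<K*n. C $$ (r,r') * E N r') = d N * E N r" if N: "N < K*n" and r: "r < K*n" for N r
  proof -
    have rb: "r div n < K" using blockK[OF r] .
    have rm: "r mod n < n" using n by simp
    have "(\<Sum>r'<K*n. C $$ (r,r') * E N r') = (\<Sum>t<K. \<Sum>v<n. C $$ (r, t*n+v) * E N (t*n+v))"
      by (rule sum_blocks)
    also have "\<dots> = (\<Sum>t<K. if t = r div n \<and> t = N div n then (\<Sum>v<n. B (N div n) $$ (r mod n, v) * f (N div n) (N mod n) v) else 0)"
    proof (intro sum.cong refl)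
      fix t assume "t \<in> {..<K}"
      then have t: "t < K" by simp
      have tv: "t*n+v < K*n" if "v < n" for v
      proof -
        have "t*n+v < t*n+n" using that by simp
        also have "\<dots> = Suc t * n" by simp
        also have "\<dots> \<le> K * n" using t by (intro mult_right_mono) auto
        finally show ?thesis .
      qed
      show "(\<Sum>v<n. C $$ (r, t*n+v) * E N (t*n+v)) = (if t = r div n \<and> t = N div n then (\<Sum>v<n. B (N div n) $$ (r mod n, v) * f (N div n) (N mod n) v) else 0)"
        by (auto intro!: sum.neutral sum.cong simp: Cent[OF r tv] E_def)
    qed
    also have "\<dots> = (if r div n = N div n then (\<Sum>v<n. B (N div n) $$ (r mod n, v) * f (N div n) (N mod n) v) else 0)"
      by (rule sum_if_eq[OF rb])
    also have "\<dots> = d N * E N r"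
      using eigfK[OF blockK[OF N] _ rm, of "N mod n"] n unfolding d_def E_def B_def by auto
    finally show ?thesis .
  qed
  have cp: "char_poly C = (\<Prod>N<K*n. [:- d N, 1:])"
    by (rule char_poly_onb[OF C onbE]) (use eigE in auto)
  have "vN_entropy C = (\<Sum>N<K*n. eta (Re (d N)))" by (rule vN_entropy_prod[OF cp])
  also have "\<dots> = (\<Sum>t<K. \<Sum>v<n. eta (Re (d (t*n+v))))" by (rule sum_blocks)
  also have "\<dots> = (\<Sum>t<K. \<Sum>i<n. eta (mu t i))" unfolding d_def by simp
  finally show ?thesis unfolding C_def K_def .
qed

lemma prim_nonneg: "primitive m n P \<Longrightarrow> P x y \<ge> 0"
  unfolding primitive_def by auto

lemma prim_out: "primitive m n P \<Longrightarrow> m \<le> x \<or> n \<le> y \<Longrightarrow> P x y = 0"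
  unfolding primitive_def by auto

lemma prim_n: "primitive m n P \<Longrightarrow> n > 0"
  unfolding primitive_def by (cases n) auto

lemma prim_m: "primitive m n P \<Longrightarrow> m > 0"
  unfolding primitive_def by (cases m) auto

lemma margX_ge: "primitive m n P \<Longrightarrow> y < n \<Longrightarrow> P x y \<le> margX n P x"
  unfolding margX_def by (rule member_le_sum) (auto intro: prim_nonneg)

lemma margX_zero: "primitive m n P \<Longrightarrow> \<not> 0 < margX n P x \<Longrightarrow> y < n \<Longrightarrow> P x y = 0"
  using margX_ge[of m n P y x] prim_nonneg[of m n P x y] by simp

lemma suppX_set: "set (suppX m n P) = {x. x < m \<and> 0 < margX n P x}"
  unfolding suppX_def by auto

lemma G:
  fixes m n :: nat and P :: "nat \<Rightarrow> nat \<Rightarrow> real" and a :: "nat \<Rightarrow> nat \<Rightarrow> complex"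
  assumes prim: "primitive m n P"
    and amp: "\<And>u v. u < m \<Longrightarrow> v < n \<Longrightarrow> a u v = complex_of_real (sqrt (P u v))"
  shows "cq_cond_entropy m n a (suppX m n P) (condY n P) \<ge> 0 \<and>
    (cq_cond_entropy m n a (suppX m n P) (condY n P) = 0 \<longrightarrow>
      (\<forall>x x' y. x < m \<longrightarrow> x' < m \<longrightarrow> y < n \<longrightarrow> P x y > 0 \<longrightarrow> P x' y > 0 \<longrightarrow> condY n P x = condY n P x'))"
proof -
  define us where "us = suppX m n P"
  define g where "g = condY n P"
  define zs where "zs = remdups (map g us)"
  define K where "K = length zs"
  define S where "S = set us"
  have n0: "n > 0" by (rule prim_n[OF prim])
  have S_def': "S = {x. x < m \<and> 0 < margX n P x}" unfolding S_def us_def suppX_set ..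
  have finS: "finite S" unfolding S_def by simp
  have Sm: "x \<in> S \<Longrightarrow> x < m" for x unfolding S_def' by simp
  have a0: "a u v = 0" if "u < m" "u \<notin> S" "v < n" for u v
  proof -
    have "\<not> 0 < margX n P u" using that unfolding S_def' by simp
    then have "P u v = 0" using margX_zero[OF prim] that by simp
    then show ?thesis using amp that by simp
  qed
  define cls where "cls x = (LEAST t. t < K \<and> zs ! t = g x)" for x
  have cls: "cls x < K \<and> zs ! cls x = g x" if x: "x \<in> S" for x
  proof -
    have "g x \<in> set zs" using x unfolding zs_def S_def by simp
    then obtain t where "t < K" "zs ! t = g x" unfolding K_def by (metis in_set_conv_nth)
    then have "\<exists>t. t < K \<and> zs ! t = g x" by blast
    from LeastI_ex[OF this] show ?thesis unfolding cls_def .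
  qed
  have dzs: "distinct zs" unfolding zs_def by simp
  have cls_iff: "(zs ! t = g x) = (t = cls x)" if x: "x \<in> S" and t: "t < K" for x t
    using cls[OF x] nth_eq_iff_index_eq[OF dzs, of t "cls x"] t unfolding K_def by auto
  define B where "B t = cq_block m n a us g (zs ! t)" for t
  define R where "R = reduced_state m n a"
  have Bc: "B t \<in> carrier_mat n n" for t unfolding B_def cq_block_def by simp
  have Rc: "R \<in> carrier_mat n n" unfolding R_def reduced_state_def by simp
  have Bent: "B t $$ (v,v') = (\<Sum>x\<in>{x\<in>S. cls x = t}. a x v * cnj (a x v'))"
    if t: "t < K" and v: "v < n" "v' < n" for t v v'
  proof -
    have "B t $$ (v,v') = (\<Sum>u\<in>S. if g u = zs ! t then a u v * cnj (a u v') else 0)"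
      using v unfolding B_def cq_block_def S_def by simp
    also have "\<dots> = (\<Sum>u\<in>S. if cls u = t then a u v * cnj (a u v') else 0)"
    proof (intro sum.cong refl)
      fix u assume u: "u \<in> S"
      have "(g u = zs ! t) = (cls u = t)" using cls_iff[OF u t] by auto
      then show "(if g u = zs ! t then a u v * cnj (a u v') else 0) = (if cls u = t then a u v * cnj (a u v') else 0)"
        by simp
    qed
    also have "\<dots> = (\<Sum>x\<in>{x\<in>S. cls x = t}. a x v * cnj (a x v'))"
      by (rule sum.inter_filter[symmetric]) (rule finS)
    finally show ?thesis .
  qed
  have Rent: "R $$ (v,v') = (\<Sum>x\<in>S. a x v * cnj (a x v'))" if v: "v < n" "v' < n" for v v'
  proof -
    have "R $$ (v,v') = (\<Sum>u<m. a u v * cnj (a u v'))" using v unfolding R_def reduced_state_def by simp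
    also have "\<dots> = (\<Sum>x\<in>S. a x v * cnj (a x v'))"
      by (rule sum.mono_neutral_right) (use Sm a0 v in auto)
    finally show ?thesis .
  qed
  have Rherm: "\<forall>i<n. \<forall>j<n. R $$ (i,j) = cnj (R $$ (j,i))"
    by (auto simp: Rent mult.commute)
  have Bherm: "\<forall>i<n. \<forall>j<n. B t $$ (i,j) = cnj (B t $$ (j,i))" if "t < K" for t
    using that by (auto simp: Bent mult.commute)
  from spectral[OF Rc Rherm] obtain e lam where
    onbe: "onb n e" and eige: "\<forall>j<n. \<forall>v<n. (\<Sum>v'<n. R $$ (v,v') * e j v') = complex_of_real (lam j) * e j v"
    by blast
  have "\<forall>t. \<exists>p. t < K \<longrightarrow> (onb n (fst p) \<and>
      (\<forall>i<n. \<forall>v<n. (\<Sum>v'<n. B t $$ (v,v') * fst p i v') = complex_of_real (snd p i) * fst p i v))"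
  proof
    fix t
    show "\<exists>p. t < K \<longrightarrow> (onb n (fst p) \<and>
      (\<forall>i<n. \<forall>v<n. (\<Sum>v'<n. B t $$ (v,v') * fst p i v') = complex_of_real (snd p i) * fst p i v))"
    proof (cases "t < K")
      case True
      from spectral[OF Bc Bherm[OF True]] obtain u d where
        "onb n u" "\<forall>j<n. \<forall>v<n. (\<Sum>v'<n. B t $$ (v,v') * u j v') = complex_of_real (d j) * u j v"
        by blast
      then show ?thesis by (intro exI[of _ "(u,d)"]) simp
    next
      case False
      then show ?thesis by simp
    qed
  qed
  from choice[OF this] obtain FM where FM: "\<And>t. t < K \<Longrightarrow> onb n (fst (FM t)) \<and>
      (\<forall>i<n. \<forall>v<n. (\<Sum>v'<n. B t $$ (v,v') * fst (FM t) i v') = complex_of_real (snd (FM t) i) * fst (FM t) i v)"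
    by blast
  define f where "f t = fst (FM t)" for t
  define mu where "mu t = snd (FM t)" for t
  have onbf: "\<And>t. t < K \<Longrightarrow> onb n (f t)" using FM unfolding f_def by blast
  have eigf: "\<And>t i v. t < K \<Longrightarrow> i < n \<Longrightarrow> v < n \<Longrightarrow>
      (\<Sum>v'<n. B t $$ (v,v') * f t i v') = complex_of_real (mu t i) * f t i v"
    using FM unfolding f_def mu_def by blast
  interpret cq: cqsetup n S a cls K e lam f mu
  proof
    show "finite S" by (rule finS)
    show "\<And>x. x \<in> S \<Longrightarrow> cls x < K" using cls by blast
    show "onb n e" by (rule onbe)
    show "\<And>j v. j < n \<Longrightarrow> v < n \<Longrightarrow> Mv n a S (e j) v = complex_of_real (lam j) * e j v"
    proof -
      fix j v assume jv: "j < n" "v < n"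
      have "Mv n a S (e j) v = (\<Sum>v'<n. R $$ (v,v') * e j v')"
        by (rule Mv_matrix[symmetric]) (use Rent jv in auto)
      then show "Mv n a S (e j) v = complex_of_real (lam j) * e j v" using eige jv by simp
    qed
    show "\<And>t. t < K \<Longrightarrow> onb n (f t)" by (rule onbf)
    show "\<And>t i v. t < K \<Longrightarrow> i < n \<Longrightarrow> v < n \<Longrightarrow>
        Mv n a {x\<in>S. cls x = t} (f t i) v = complex_of_real (mu t i) * f t i v"
    proof -
      fix t i v assume tiv: "t < K" "i < n" "v < n"
      have "Mv n a {x\<in>S. cls x = t} (f t i) v = (\<Sum>v'<n. B t $$ (v,v') * f t i v')"
        by (rule Mv_matrix[symmetric]) (use Bent tiv in auto)
      then show "Mv n a {x\<in>S. cls x = t} (f t i) v = complex_of_real (mu t i) * f t i v"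
        using eigf[OF tiv] by simp
    qed
  qed
  have vR: "vN_entropy R = (\<Sum>j<n. eta (lam j))"
  proof -
    have "char_poly R = (\<Prod>j<n. [:- complex_of_real (lam j), 1:])"
      by (rule char_poly_onb[OF Rc onbe]) (use eige in auto)
    from vN_entropy_prod[OF this] show ?thesis by simp
  qed
  have vC: "vN_entropy (cq_state m n a us g) = (\<Sum>t<K. \<Sum>i<n. eta (mu t i))"
    unfolding K_def zs_def
    by (rule cq_state_entropy[OF n0]) (use onbf eigf in \<open>auto simp: K_def zs_def B_def\<close>)
  have ent: "cq_cond_entropy m n a us g = (\<Sum>t<K. \<Sum>i<n. cq.T t i) / ln 2"
    unfolding cq_cond_entropy_def vC R_def[symmetric] vR by (rule cq.main_ineq)
  have ln2: "ln (2::real) > 0" by simp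
  have nonneg: "cq_cond_entropy m n a us g \<ge> 0"
    unfolding ent using cq.main_nonneg ln2 by simp
  have orth: "cq_cond_entropy m n a us g = 0 \<longrightarrow>
      (\<forall>x x' y. x < m \<longrightarrow> x' < m \<longrightarrow> y < n \<longrightarrow> P x y > 0 \<longrightarrow> P x' y > 0 \<longrightarrow> g x = g x')"
  proof (rule impI, intro allI)
    fix x x' y
    assume E0: "cq_cond_entropy m n a us g = 0"
    show "x < m \<longrightarrow> x' < m \<longrightarrow> y < n \<longrightarrow> P x y > 0 \<longrightarrow> P x' y > 0 \<longrightarrow> g x = g x'"
    proof (intro impI)
      assume xm: "x < m" and x'm: "x' < m" and y: "y < n" and px: "P x y > 0" and px': "P x' y > 0"
      have T0: "(\<Sum>t<K. \<Sum>i<n. cq.T t i) = 0" using E0 ln2 unfolding ent by simp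
      have xS: "x \<in> S" unfolding S_def' using xm margX_ge[OF prim y, of x] px by simp
      have x'S: "x' \<in> S" unfolding S_def' using x'm margX_ge[OF prim y, of x'] px' by simp
      show "g x = g x'"
      proof (rule ccontr)
        assume ne: "g x \<noteq> g x'"
        have "cls x \<noteq> cls x'"
        proof
          assume "cls x = cls x'"
          then have "g x = g x'" using cls[OF xS] cls[OF x'S] by simp
          with ne show False by simp
        qed
        from cq.equality_orth[OF T0 xS x'S this] have I0: "ipf n (a x) (a x') = 0" .
        have "ipf n (a x) (a x') = complex_of_real (\<Sum>v<n. sqrt (P x v) * sqrt (P x' v))"
          unfolding ipf_def of_real_sum by (intro sum.cong refl) (simp add: amp xm x'm)
        then have "complex_of_real (\<Sum>v<n. sqrt (P x v) * sqrt (P x' v)) = 0" using I0 by (rule subst)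
        then have "(\<Sum>v<n. sqrt (P x v) * sqrt (P x' v)) = 0" by (simp only: of_real_eq_0_iff)
        moreover have "sqrt (P x y) * sqrt (P x' y) \<le> (\<Sum>v<n. sqrt (P x v) * sqrt (P x' v))"
          by (rule member_le_sum) (use y prim_nonneg[OF prim] in auto)
        moreover have "sqrt (P x y) * sqrt (P x' y) > 0" using px px' by simp
        ultimately show False by simp
      qed
    qed
  qed
  show ?thesis unfolding us_def[symmetric] g_def[symmetric] using nonneg orth by (rule conjI)
qed

definition PropC :: "nat \<Rightarrow> nat \<Rightarrow> (nat \<Rightarrow> nat \<Rightarrow> real) \<Rightarrow> bool" where
  "PropC m n P \<longleftrightarrow> (\<forall>x x' y. x < m \<longrightarrow> x' < m \<longrightarrow> y < n \<longrightarrow> P x y > 0 \<longrightarrow> P x' y > 0 \<longrightarrow> condY n P x = condY n P x')"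

lemma eta_zero: "eta 0 = 0" unfolding eta_def by simp

lemma C1:
  assumes prim: "primitive m n P" and pc: "PropC m n P"
  shows "dep_cond_entropy m n P = 0"
proof -
  define us where "us = suppX m n P"
  define g where "g = condY n P"
  define S where "S = set us"
  have S_def': "S = {x. x < m \<and> 0 < margX n P x}" unfolding S_def us_def suppX_set ..
  have finS: "finite S" unfolding S_def by simp
  have dv: "set (dep_values m n P) = g ` S" unfolding dep_values_def S_def us_def g_def by simp
  have dj: "dep_joint m n P z y = (\<Sum>x\<in>S. if g x = z then P x y else 0)" for z y
    unfolding dep_joint_def S_def us_def g_def ..
  have mY: "margY m P y = (\<Sum>x\<in>S. P x y)" if y: "y < n" for y
  proof -
    have "margY m P y = (\<Sum>x<m. P x y)" unfolding margY_def ..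
    also have "\<dots> = (\<Sum>x\<in>S. P x y)"
      by (rule sum.mono_neutral_right) (use y margX_zero[OF prim] in \<open>auto simp: S_def'\<close>)
    finally show ?thesis .
  qed
  have nn: "P x y \<ge> 0" for x y by (rule prim_nonneg[OF prim])
  have each: "(\<Sum>z\<in>g ` S. eta (dep_joint m n P z y)) = eta (margY m P y)" if y: "y < n" for y
  proof (cases "\<exists>x0\<in>S. P x0 y > 0")
    case True
    then obtain x0 where x0: "x0 \<in> S" "P x0 y > 0" by blast
    have same: "g x = g x0" if "x \<in> S" "P x y > 0" for x
      using pc that x0 y unfolding PropC_def g_def S_def' by blast
    have dj_eq: "dep_joint m n P z y = (if z = g x0 then margY m P y else 0)" for z
    proof (cases "z = g x0")
      case True
      have "dep_joint m n P z y = (\<Sum>x\<in>S. P x y)"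
        unfolding dj
      proof (intro sum.cong refl)
        fix x assume x: "x \<in> S"
        show "(if g x = z then P x y else 0) = P x y"
          using same[OF x] True nn[of x y] by (cases "P x y > 0") auto
      qed
      then show ?thesis using True mY[OF y] by simp
    next
      case False
      have "dep_joint m n P z y = 0"
        unfolding dj
      proof (intro sum.neutral ballI)
        fix x assume x: "x \<in> S"
        show "(if g x = z then P x y else 0) = 0"
          using same[OF x] False nn[of x y] by (cases "P x y > 0") auto
      qed
      then show ?thesis using False by simp
    qed
    have "(\<Sum>z\<in>g ` S. eta (dep_joint m n P z y)) = (\<Sum>z\<in>g ` S. if z = g x0 then eta (margY m P y) else 0)"
      by (intro sum.cong refl) (simp add: dj_eq eta_zero)
    also have "\<dots> = eta (margY m P y)" using x0 finS by simp
    finally show ?thesis .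
  next
    case False
    then have z: "P x y = 0" if "x \<in> S" for x using that nn[of x y] by force
    have "dep_joint m n P zz y = 0" for zz unfolding dj by (intro sum.neutral) (simp add: z)
    moreover have "margY m P y = 0" using mY[OF y] z by simp
    ultimately show ?thesis by (simp add: eta_zero)
  qed
  have "(\<Sum>z\<in>set (dep_values m n P). \<Sum>y<n. eta (dep_joint m n P z y))
      = (\<Sum>y<n. \<Sum>z\<in>g ` S. eta (dep_joint m n P z y))"
    unfolding dv by (rule sum.swap)
  also have "\<dots> = (\<Sum>y<n. eta (margY m P y))" by (intro sum.cong refl) (simp add: each)
  finally show ?thesis unfolding dep_cond_entropy_def by simp
qed

lemma prim_transp: "primitive m n P \<Longrightarrow> primitive n m (transp_prim P)"
  unfolding primitive_def transp_prim_def by (auto simp: sum.swap[of _ "{..<n}"])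

lemma C3:
  assumes prim: "primitive m n P" and pc: "PropC n m (transp_prim P)"
  shows "PropC m n P"
  unfolding PropC_def
proof (intro allI impI)
  fix x x' y
  assume xm: "x < m" and x'm: "x' < m" and y: "y < n" and px: "P x y > 0" and px': "P x' y > 0"
  define q where "q w = margY m P w" for w
  have nn: "P u w \<ge> 0" for u w by (rule prim_nonneg[OF prim])
  have qpos: "q w > 0" if "u < m" "P u w > 0" for u w
  proof -
    have "P u w \<le> (\<Sum>u<m. P u w)" by (rule member_le_sum) (use that nn in auto)
    then show ?thesis using that unfolding q_def margY_def by simp
  qed
  have cross: "P x'' y0 * q w = P x'' w * q y0"
    if u: "u < m" and y0: "y0 < n" and w: "w < n" and p1: "P u y0 > 0" and p2: "P u w > 0" and x'': "x'' < m"
    for u y0 w x''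
  proof -
    have eq: "condY m (transp_prim P) y0 = condY m (transp_prim P) w"
      using pc u y0 w p1 p2 unfolding PropC_def transp_prim_def by blast
    have mT: "margX m (\<lambda>y x. P x y) v = q v" for v
      unfolding margX_def q_def margY_def ..
    from fun_cong[OF eq, of x''] x'' have "P x'' y0 / q y0 = P x'' w / q w"
      unfolding condY_def transp_prim_def mT by simp
    then show ?thesis using qpos[OF u p1] qpos[OF u p2] by (simp add: field_simps)
  qed
  have key: "P x w * P x' y = P x' w * P x y" if w: "w < n" for w
  proof (cases "P x w > 0")
    case True
    have 1: "P x y * q w = P x w * q y" by (rule cross[OF xm y w px True xm])
    have 2: "P x' y * q w = P x' w * q y" by (rule cross[OF xm y w px True x'm])
    have "(P x w * P x' y) * q y = (P x' w * P x y) * q y"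
      using 1 2 by (metis mult.commute mult.left_commute)
    then show ?thesis using qpos[OF xm px] by simp
  next
    case False
    then have x0: "P x w = 0" using nn[of x w] by simp
    show ?thesis
    proof (cases "P x' w > 0")
      case True
      have 1: "P x y * q w = P x w * q y" by (rule cross[OF x'm y w px' True xm])
      then have "P x y * q w = 0" using x0 by simp
      moreover have "q w > 0" using qpos[OF x'm True] .
      ultimately show ?thesis using px by simp
    next
      case False
      then have "P x' w = 0" using nn[of x' w] by simp
      then show ?thesis using x0 by simp
    qed
  qed
  have mXpos: "margX n P u > 0" if "u < m" "P u y > 0" for u
    using margX_ge[OF prim y, of u] that by simp
  have mXid: "margX n P x * P x' y = margX n P x' * P x y"
    unfolding margX_def sum_distrib_right by (intro sum.cong refl) (simp add: key)
  show "condY n P x = condY n P x'"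
  proof
    fix w
    show "condY n P x w = condY n P x' w"
    proof (cases "w < n")
      case True
      have "P x w * margX n P x' * P x y = P x' w * margX n P x * P x y"
        using key[OF True] mXid by (metis mult.commute mult.left_commute)
      then have "P x w * margX n P x' = P x' w * margX n P x" using px by simp
      then show ?thesis unfolding condY_def using True mXpos[OF xm px] mXpos[OF x'm px']
        by (simp add: field_simps)
    next
      case False
      then show ?thesis unfolding condY_def by simp
    qed
  qed
qed

lemma canon_amp:
  assumes "u < m" "v < n"
  shows "canonical_embedding m n P $ (u * n + v) = complex_of_real (sqrt (P u v))"
proof -
  have "u * n + v < u * n + n" using assms by simp
  also have "\<dots> = Suc u * n" by simp
  also have "\<dots> \<le> m * n" using assms by (intro mult_right_mono) auto
  finally have lt: "u * n + v < m * n" .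
  show ?thesis using lt assms unfolding canonical_embedding_def regular_embedding_def by simp
qed

theorem lemma1:
  fixes m n :: nat and P :: "nat \<Rightarrow> nat \<Rightarrow> real"
  assumes "primitive m n P"
    and "nontrivial_primitive m n P"
  shows "S_XY_B m n P (canonical_embedding m n P) > 0
       \<and> S_YX_A m n P (canonical_embedding m n P) > 0"
proof -
  note prim = assms(1)
  have dep: "dep_cond_entropy m n P \<noteq> 0" using assms(2) unfolding nontrivial_primitive_def .
  let ?\<psi> = "canonical_embedding m n P"
  have G1: "cq_cond_entropy m n (\<lambda>x y. ?\<psi> $ (x * n + y)) (suppX m n P) (condY n P) \<ge> 0 \<and>
    (cq_cond_entropy m n (\<lambda>x y. ?\<psi> $ (x * n + y)) (suppX m n P) (condY n P) = 0 \<longrightarrow>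
      (\<forall>x x' y. x < m \<longrightarrow> x' < m \<longrightarrow> y < n \<longrightarrow> P x y > 0 \<longrightarrow> P x' y > 0 \<longrightarrow> condY n P x = condY n P x'))"
    by (rule G[OF prim]) (simp add: canon_amp)
  have part1: "S_XY_B m n P ?\<psi> > 0"
  proof -
    have "S_XY_B m n P ?\<psi> \<noteq> 0"
    proof
      assume "S_XY_B m n P ?\<psi> = 0"
      then have "PropC m n P" using G1 unfolding S_XY_B_def PropC_def by blast
      from C1[OF prim this] dep show False by simp
    qed
    moreover have "S_XY_B m n P ?\<psi> \<ge> 0" using G1 unfolding S_XY_B_def by blast
    ultimately show ?thesis by simp
  qed
  have primT: "primitive n m (transp_prim P)" by (rule prim_transp[OF prim])
  have G2: "cq_cond_entropy n m (\<lambda>y x. ?\<psi> $ (x * n + y)) (suppX n m (transp_prim P)) (condY m (transp_prim P)) \<ge> 0 \<and>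
    (cq_cond_entropy n m (\<lambda>y x. ?\<psi> $ (x * n + y)) (suppX n m (transp_prim P)) (condY m (transp_prim P)) = 0 \<longrightarrow>
      (\<forall>x x' y. x < n \<longrightarrow> x' < n \<longrightarrow> y < m \<longrightarrow> transp_prim P x y > 0 \<longrightarrow> transp_prim P x' y > 0 \<longrightarrow>
         condY m (transp_prim P) x = condY m (transp_prim P) x'))"
    by (rule G[OF primT]) (simp add: canon_amp transp_prim_def)
  have part2: "S_YX_A m n P ?\<psi> > 0"
  proof -
    have "S_YX_A m n P ?\<psi> \<noteq> 0"
    proof
      assume "S_YX_A m n P ?\<psi> = 0"
      then have "PropC n m (transp_prim P)" using G2 unfolding S_YX_A_def PropC_def by blast
      from C1[OF prim C3[OF prim this]] dep show False by simp
    qed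
    moreover have "S_YX_A m n P ?\<psi> \<ge> 0" using G2 unfolding S_YX_A_def by blast
    ultimately show ?thesis by simp
  qed
  from part1 part2 show ?thesis by (rule conjI)
qed

end
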